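(* Let $\mathbb{K}$ be an algebraically closed field of characteristic $p$, with $p=0$ or $p\ge5$. Let $(\Gamma_1,\Gamma_2,\Gamma_3)$ and $(\Delta_1,\Delta_2,\Delta_3)$ be two dual $3$-nets of conic-line type of order $n$ in $PG(2,\mathbb{K})$ (with $n<p$ if $p>0$), where $\Gamma_1\cup\Gamma_2$ and $\Delta_1\cup\Delta_2$ lie on irreducible conics, $\Gamma_3$ lies on a line $\ell$ and $\Delta_3$ lies on a line $s$. If $n\ge5$ and $\Gamma_1=\Delta_1$, then $\ell=s$.
   Context: A dual $3$-net of order $n$ in $PG(2,\mathbb{K})$ is a triple of pairwise disjoint point sets, each of size $n$, such that every line meeting two distinct components meets each component in exactly one point. A dual $3$-net of order $n\ge4$ is of conic-line type if two of its components lie on an irreducible conic and the third lies on a line. *)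

theory Defs
  imports Main "HOL-Computational_Algebra.Polynomial"
begin

definition alg_closed :: "'k::field itself \<Rightarrow> bool" where
  "alg_closed _ \<longleftrightarrow> (\<forall>q :: 'k poly. degree q > 0 \<longrightarrow> (\<exists>x. poly q x = 0))"

text \<open>Homogeneous coordinates are triples; a point of PG(2,K) is the set of
  nonzero scalar multiples of a nonzero triple.\<close>
type_synonym 'k vec3 = "'k \<times> 'k \<times> 'k"
type_synonym 'k ppoint = "'k vec3 set"

definition pt_of :: "'k::field vec3 \<Rightarrow> 'k ppoint" where
  "pt_of v = (case v of (x, y, z) \<Rightarrow> {(c * x, c * y, c * z) | c. c \<noteq> 0})"

definition proj_points :: "'k::field ppoint set" where
  "proj_points = {pt_of v | v. v \<noteq> (0, 0, 0)}"

definition lin :: "'k::field vec3 \<Rightarrow> 'k vec3 \<Rightarrow> 'k" where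
  "lin u v = (case u of (a, b, c) \<Rightarrow> case v of (x, y, z) \<Rightarrow> a * x + b * y + c * z)"

definition proj_line :: "'k::field vec3 \<Rightarrow> 'k ppoint set" where
  "proj_line u = {pt_of v | v. v \<noteq> (0, 0, 0) \<and> lin u v = 0}"

definition is_line :: "'k::field ppoint set \<Rightarrow> bool" where
  "is_line L \<longleftrightarrow> (\<exists>u. u \<noteq> (0, 0, 0) \<and> L = proj_line u)"

definition quad :: "'k::field vec3 \<Rightarrow> 'k vec3 \<Rightarrow> 'k vec3 \<Rightarrow> 'k" where
  "quad A B v = (case A of (a, b, c) \<Rightarrow> case B of (d, e, f) \<Rightarrow> case v of (x, y, z) \<Rightarrow>
      a * x^2 + b * y^2 + c * z^2 + d * x * y + e * x * z + f * y * z)"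

text \<open>Irreducible quadratic form: it is not a product of two linear forms
  (this also excludes the zero form, which is 0 * 0).\<close>
definition irreducible_qf :: "'k::field vec3 \<Rightarrow> 'k vec3 \<Rightarrow> bool" where
  "irreducible_qf A B \<longleftrightarrow> \<not> (\<exists>u w. \<forall>v. quad A B v = lin u v * lin w v)"

definition conic_pts :: "'k::field vec3 \<Rightarrow> 'k vec3 \<Rightarrow> 'k ppoint set" where
  "conic_pts A B = {pt_of v | v. v \<noteq> (0, 0, 0) \<and> quad A B v = 0}"

definition is_irred_conic :: "'k::field ppoint set \<Rightarrow> bool" where
  "is_irred_conic C \<longleftrightarrow> (\<exists>A B. irreducible_qf A B \<and> C = conic_pts A B)"

definition dual_3net :: "'k::field ppoint set \<Rightarrow> 'k ppoint set \<Rightarrow> 'k ppoint set \<Rightarrow> nat \<Rightarrow> bool" where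
  "dual_3net G1 G2 G3 n \<longleftrightarrow>
     (let G = (\<lambda>i::nat. if i = 1 then G1 else if i = 2 then G2 else G3) in
       (\<forall>i\<in>{1,2,3}. G i \<subseteq> proj_points \<and> finite (G i) \<and> card (G i) = n) \<and>
       (\<forall>i\<in>{1,2,3}. \<forall>j\<in>{1,2,3}. i \<noteq> j \<longrightarrow> G i \<inter> G j = {}) \<and>
       (\<forall>L. is_line L \<longrightarrow>
          (\<exists>i\<in>{1,2,3}. \<exists>j\<in>{1,2,3}. i \<noteq> j \<and> L \<inter> G i \<noteq> {} \<and> L \<inter> G j \<noteq> {}) \<longrightarrow>
          (\<forall>k\<in>{1,2,3}. card (L \<inter> G k) = 1)))"

definition conic_line_type :: "'k::field ppoint set \<Rightarrow> 'k ppoint set \<Rightarrow> 'k ppoint set \<Rightarrow> nat \<Rightarrow> 'k ppoint set \<Rightarrow> 'k ppoint set \<Rightarrow> bool" where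
  "conic_line_type G1 G2 G3 n C L \<longleftrightarrow> dual_3net G1 G2 G3 n \<and> n \<ge> 4 \<and>
     is_irred_conic C \<and> G1 \<union> G2 \<subseteq> C \<and> is_line L \<and> G3 \<subseteq> L"

end

theory Submission
  imports Defs
begin

definition sc :: "'k::field \<Rightarrow> 'k vec3 \<Rightarrow> 'k vec3" where
  "sc c v = (case v of (x,y,z) \<Rightarrow> (c*x, c*y, c*z))"
definition vadd :: "'k::field vec3 \<Rightarrow> 'k vec3 \<Rightarrow> 'k vec3" where
  "vadd v w = (case v of (x,y,z) \<Rightarrow> case w of (a,b,c) \<Rightarrow> (x+a, y+b, z+c))"
definition cross :: "'k::field vec3 \<Rightarrow> 'k vec3 \<Rightarrow> 'k vec3" where
  "cross v w = (case v of (a1,a2,a3) \<Rightarrow> case w of (b1,b2,b3) \<Rightarrow>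
     (a2*b3 - a3*b2, a3*b1 - a1*b3, a1*b2 - a2*b1))"
definition det3 :: "'k::field vec3 \<Rightarrow> 'k vec3 \<Rightarrow> 'k vec3 \<Rightarrow> 'k" where
  "det3 a b c = lin a (cross b c)"
definition q0 :: "'k::field vec3 \<Rightarrow> 'k" where
  "q0 v = (case v of (x,y,z) \<Rightarrow> y^2 - x*z)"
definition phi :: "'k::field \<times> 'k \<Rightarrow> 'k vec3" where
  "phi t = (case t of (t0,t1) \<Rightarrow> (t0^2, t0*t1, t1^2))"
definition chord :: "'k::field \<times> 'k \<Rightarrow> 'k \<times> 'k \<Rightarrow> 'k vec3" where
  "chord a b = (case a of (a0,a1) \<Rightarrow> case b of (b0,b1) \<Rightarrow> (a1*b1, -(a0*b1 + a1*b0), a0*b0))"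
definition det2 :: "'k::field \<times> 'k \<Rightarrow> 'k \<times> 'k \<Rightarrow> 'k" where
  "det2 a b = (case a of (a0,a1) \<Rightarrow> case b of (b0,b1) \<Rightarrow> a0*b1 - a1*b0)"
definition sc2 :: "'k::field \<Rightarrow> 'k \<times> 'k \<Rightarrow> 'k \<times> 'k" where
  "sc2 c s = (case s of (s0,s1) \<Rightarrow> (c*s0, c*s1))"
definition Rm :: "'k::field vec3 \<Rightarrow> 'k \<times> 'k \<Rightarrow> 'k \<times> 'k" where
  "Rm w s = (case w of (w1,w2,w3) \<Rightarrow> case s of (s0,s1) \<Rightarrow> (w2*s0 - w1*s1, w3*s0 - w2*s1))"
definition mapM :: "'k::field vec3 \<times> 'k vec3 \<times> 'k vec3 \<Rightarrow> 'k vec3 \<Rightarrow> 'k vec3" where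
  "mapM V w = (case V of (V0,V1,V2) \<Rightarrow> case w of (x,y,z) \<Rightarrow> vadd (sc x V0) (vadd (sc y V1) (sc z V2)))"
definition detM :: "'k::field vec3 \<times> 'k vec3 \<times> 'k vec3 \<Rightarrow> 'k" where
  "detM V = (case V of (V0,V1,V2) \<Rightarrow> det3 V0 V1 V2)"
definition invM :: "'k::field vec3 \<times> 'k vec3 \<times> 'k vec3 \<Rightarrow> 'k vec3 \<Rightarrow> 'k vec3" where
  "invM V v = (case V of (V0,V1,V2) \<Rightarrow> sc (1 / detM V) (det3 v V1 V2, det3 V0 v V2, det3 V0 V1 v))"
definition trM :: "'k::field vec3 \<times> 'k vec3 \<times> 'k vec3 \<Rightarrow> 'k vec3 \<Rightarrow> 'k vec3" where
  "trM V u = (case V of (V0,V1,V2) \<Rightarrow> (lin u V0, lin u V1, lin u V2))"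
definition bl :: "'k::field vec3 \<Rightarrow> 'k vec3 \<Rightarrow> 'k vec3 \<Rightarrow> 'k vec3 \<Rightarrow> 'k" where
  "bl A B v w = quad A B (vadd v w) - quad A B v - quad A B w"

lemmas vdefs = sc_def vadd_def cross_def det3_def q0_def phi_def chord_def det2_def sc2_def Rm_def
  mapM_def detM_def invM_def trM_def bl_def lin_def quad_def

lemma det_phi: "det3 (phi s) w (phi t) = - det2 s t * lin (chord s t) w"
  by (cases s; cases t; cases w) (simp add: vdefs algebra_simps power2_eq_square)
lemma det_mapM: "det3 (mapM V a) (mapM V b) (mapM V c) = detM V * det3 a b c"
  by (cases V; cases a; cases b; cases c; cases "fst V"; cases "fst (snd V)"; cases "snd (snd V)")
    (simp add: vdefs algebra_simps)
lemma det_Rm: "det2 (Rm w s) t = - lin (chord s t) w"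
  by (cases s; cases t; cases w) (simp add: vdefs algebra_simps)
lemma chord_phi: "lin (chord a b) (phi t) = det2 t a * det2 t b"
  by (cases a; cases b; cases t) (simp add: vdefs algebra_simps power2_eq_square)
lemma Rm_Rm: "Rm w (Rm w s) = sc2 (q0 w) s"
  by (cases s; cases w) (simp add: vdefs algebra_simps power2_eq_square)
lemma vander: "det3 (phi a) (phi b) (phi c) = det2 a b * det2 a c * det2 b c"
  by (cases a; cases b; cases c) (simp add: vdefs algebra_simps power2_eq_square)
lemma lin_cross: "lin (cross a b) c = det3 a b c"
  by (cases a; cases b; cases c) (simp add: vdefs algebra_simps)
lemma lin_sc: "lin u (sc c v) = c * lin u v"
  by (cases u; cases v) (simp add: vdefs algebra_simps)
lemma lin_sc1: "lin (sc c u) v = c * lin u v"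
  by (cases u; cases v) (simp add: vdefs algebra_simps)
lemma quad_sc: "quad A B (sc c v) = c^2 * quad A B v"
  by (cases A; cases B; cases v) (simp add: vdefs algebra_simps power2_eq_square)
lemma sc_sc: "sc a (sc b v) = sc (a*b) v"
  by (cases v) (simp add: vdefs)
lemma sc_1: "sc 1 v = v"
  by (cases v) (simp add: vdefs)
lemma sc_0_iff: "(sc c v = (0,0,0)) \<longleftrightarrow> c = 0 \<or> v = (0,0,0)"
  by (cases v) (auto simp: vdefs)
lemma sc2_sc2: "sc2 a (sc2 b v) = sc2 (a*b) v"
  by (cases v) (simp add: vdefs)
lemma sc2_1: "sc2 1 v = v"
  by (cases v) (simp add: vdefs)
lemma sc2_0_iff: "(sc2 c v = (0,0)) \<longleftrightarrow> c = 0 \<or> v = (0,0)"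
  by (cases v) (auto simp: vdefs)
lemma lin_comm: "lin u v = lin v u"
  by (cases u; cases v) (simp add: vdefs algebra_simps)
lemma det2_sc2_l: "det2 (sc2 c a) b = c * det2 a b"
  by (cases a; cases b) (simp add: vdefs algebra_simps)
lemma det2_sc2_r: "det2 a (sc2 c b) = c * det2 a b"
  by (cases a; cases b) (simp add: vdefs algebra_simps)
lemma det2_self: "det2 a a = 0"
  by (cases a) (simp add: vdefs algebra_simps)
lemma det2_swap: "det2 a b = - det2 b a"
  by (cases a; cases b) (simp add: vdefs algebra_simps)
lemma phi_sc2: "phi (sc2 c t) = sc (c^2) (phi t)"
  by (cases t) (simp add: vdefs algebra_simps power2_eq_square)
lemma mapM_sc: "mapM V (sc c w) = sc c (mapM V w)"
  by (cases V; cases w; cases "fst V"; cases "fst (snd V)"; cases "snd (snd V)") (simp add: vdefs algebra_simps)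
lemma chord_sym: "chord a b = chord b a"
  by (cases a; cases b) (simp add: vdefs algebra_simps)
lemma chord_sc2: "chord (sc2 x a) (sc2 y b) = sc (x*y) (chord a b)"
  by (cases a; cases b) (simp add: vdefs algebra_simps)
lemma Rm_sc2: "Rm w (sc2 c s) = sc2 c (Rm w s)"
  by (cases w; cases s) (simp add: vdefs algebra_simps)
lemma phi_nz: "t \<noteq> (0,0) \<Longrightarrow> phi t \<noteq> (0,0,0)"
  by (cases t) (auto simp: vdefs)

lemma cramer3: "mapM (V0,V1,V2) (det3 v V1 V2, det3 V0 v V2, det3 V0 V1 v) = sc (det3 V0 V1 V2) v"
  by (cases V0; cases V1; cases V2; cases v) (simp add: vdefs algebra_simps)
lemma cramer3b: "(det3 (mapM (V0,V1,V2) w) V1 V2, det3 V0 (mapM (V0,V1,V2) w) V2, det3 V0 V1 (mapM (V0,V1,V2) w))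
   = sc (det3 V0 V1 V2) w"
  by (cases V0; cases V1; cases V2; cases w) (simp add: vdefs algebra_simps)

lemma mapM_inv: "detM V \<noteq> 0 \<Longrightarrow> mapM V (invM V v) = v"
proof -
  assume d: "detM V \<noteq> 0"
  obtain V0 V1 V2 where V: "V = (V0,V1,V2)" by (cases V) auto
  have "mapM V (invM V v) = sc (1/detM V) (mapM V (det3 v V1 V2, det3 V0 v V2, det3 V0 V1 v))"
    by (simp add: V invM_def mapM_sc)
  also have "\<dots> = v" using d by (simp add: V cramer3 sc_sc detM_def sc_1)
  finally show ?thesis .
qed

lemma inv_mapM: "detM V \<noteq> 0 \<Longrightarrow> invM V (mapM V w) = w"
proof -
  assume d: "detM V \<noteq> 0"
  obtain V0 V1 V2 where V: "V = (V0,V1,V2)" by (cases V) auto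
  show ?thesis using d by (simp add: V invM_def cramer3b sc_sc detM_def sc_1)
qed

lemma mapM_inj: "detM V \<noteq> 0 \<Longrightarrow> mapM V w = mapM V w' \<Longrightarrow> w = w'"
  by (metis inv_mapM)

lemma mapM_0: "mapM V (0,0,0) = (0,0,0)"
  by (cases V; cases "fst V"; cases "fst (snd V)"; cases "snd (snd V)") (simp add: vdefs)

lemma mapM_nz: "detM V \<noteq> 0 \<Longrightarrow> w \<noteq> (0,0,0) \<Longrightarrow> mapM V w \<noteq> (0,0,0)"
  by (metis mapM_0 mapM_inj)

lemma lin_mapM: "lin u (mapM V w) = lin (trM V u) w"
  by (cases V; cases w; cases u; cases "fst V"; cases "fst (snd V)"; cases "snd (snd V)") (simp add: vdefs algebra_simps)

lemma trM_inj0: "detM V \<noteq> 0 \<Longrightarrow> trM V u = (0,0,0) \<Longrightarrow> u = (0,0,0)"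
proof -
  assume d: "detM V \<noteq> 0" and t: "trM V u = (0,0,0)"
  have "\<And>v. lin u v = 0"
  proof -
    fix v
    have "lin u v = lin u (mapM V (invM V v))" using d by (simp add: mapM_inv)
    also have "\<dots> = 0" by (simp only: lin_mapM t) (simp add: lin_def split: prod.splits)
    finally show "lin u v = 0" .
  qed
  from this[of "(1,0,0)"] this[of "(0,1,0)"] this[of "(0,0,1)"] show ?thesis
    by (cases u) (simp add: lin_def)
qed

lemma trM_sc: "trM V (sc c u) = sc c (trM V u)"
  by (cases V; cases u; cases "fst V"; cases "fst (snd V)"; cases "snd (snd V)") (simp add: vdefs algebra_simps)

lemma trM_diff: "trM V (vadd u (sc (-1) u')) = vadd (trM V u) (sc (-1) (trM V u'))"
  by (cases V; cases u; cases u'; cases "fst V"; cases "fst (snd V)"; cases "snd (snd V)") (simp add: vdefs algebra_simps)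

section \<open>Projective points\<close>

lemma pt_of_iff: "w \<in> pt_of v \<longleftrightarrow> (\<exists>c. c \<noteq> 0 \<and> w = sc c v)"
  by (cases v) (auto simp: pt_of_def sc_def)

lemma pt_of_mem: "v \<in> pt_of v"
  using pt_of_iff sc_1 by (metis one_neq_zero)

lemma pt_of_sc: "c \<noteq> 0 \<Longrightarrow> pt_of (sc c v) = pt_of v"
proof
  assume c: "c \<noteq> 0"
  show "pt_of (sc c v) \<subseteq> pt_of v"
  proof
    fix x assume "x \<in> pt_of (sc c v)"
    then obtain d where d: "d \<noteq> 0" "x = sc d (sc c v)" by (auto simp: pt_of_iff)
    then have "x = sc (d*c) v" "d * c \<noteq> 0" using c by (auto simp: sc_sc)
    then show "x \<in> pt_of v" unfolding pt_of_iff by blast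
  qed
  show "pt_of v \<subseteq> pt_of (sc c v)"
  proof
    fix x assume "x \<in> pt_of v"
    then obtain d where d: "d \<noteq> 0" "x = sc d v" by (auto simp: pt_of_iff)
    have "x = sc (d / c) (sc c v)" using c d by (simp add: sc_sc)
    then show "x \<in> pt_of (sc c v)" using c d unfolding pt_of_iff by (intro exI[of _ "d/c"]) simp
  qed
qed

lemma pt_of_eq: "pt_of v = pt_of w \<Longrightarrow> \<exists>c. c \<noteq> 0 \<and> w = sc c v"
  using pt_of_mem pt_of_iff by metis

lemma pt_of_eqI: "c \<noteq> 0 \<Longrightarrow> w = sc c v \<Longrightarrow> pt_of w = pt_of v"
  using pt_of_sc by metis

lemma in_line_iff: "v \<noteq> (0,0,0) \<Longrightarrow> pt_of v \<in> proj_line u \<longleftrightarrow> lin u v = 0"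
proof
  assume "pt_of v \<in> proj_line u"
  then obtain v' where v': "v' \<noteq> (0,0,0)" "lin u v' = 0" "pt_of v = pt_of v'"
    by (auto simp: proj_line_def)
  then obtain c where "v = sc c v'" using pt_of_eq by metis
  then show "lin u v = 0" using v' by (simp add: lin_sc)
next
  assume "v \<noteq> (0,0,0)" "lin u v = 0"
  then show "pt_of v \<in> proj_line u" unfolding proj_line_def by blast
qed

lemma in_conic_iff: "v \<noteq> (0,0,0) \<Longrightarrow> pt_of v \<in> conic_pts A B \<longleftrightarrow> quad A B v = 0"
proof
  assume "pt_of v \<in> conic_pts A B"
  then obtain v' where v': "v' \<noteq> (0,0,0)" "quad A B v' = 0" "pt_of v = pt_of v'"
    by (auto simp: conic_pts_def)
  then obtain c where "v = sc c v'" using pt_of_eq by metis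
  then show "quad A B v = 0" using v' by (simp add: quad_sc)
next
  assume "v \<noteq> (0,0,0)" "quad A B v = 0"
  then show "pt_of v \<in> conic_pts A B" unfolding conic_pts_def by blast
qed

lemma proj_pointsE: "P \<in> proj_points \<Longrightarrow> (\<And>v. v \<noteq> (0,0,0) \<Longrightarrow> P = pt_of v \<Longrightarrow> thesis) \<Longrightarrow> thesis"
  by (auto simp: proj_points_def)

lemma conic_ptsE: "P \<in> conic_pts A B \<Longrightarrow> (\<And>v. v \<noteq> (0,0,0) \<Longrightarrow> P = pt_of v \<Longrightarrow> quad A B v = 0 \<Longrightarrow> thesis) \<Longrightarrow> thesis"
  by (auto simp: conic_pts_def)

lemma prop3: "cross v w = (0,0,0) \<Longrightarrow> v \<noteq> (0,0,0) \<Longrightarrow> \<exists>c. w = sc c v"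
proof -
  assume cr: "cross v w = (0,0,0)" and v: "v \<noteq> (0,0,0)"
  obtain a b c where V: "v = (a,b,c)" by (cases v) auto
  obtain x y z where W: "w = (x,y,z)" by (cases w) auto
  have e: "b*z = c*y" "c*x = a*z" "a*y = b*x" using cr by (auto simp: V W cross_def)
  show ?thesis
  proof (cases "a = 0")
    case False
    have "w = sc (x/a) v" using False e by (simp add: V W sc_def field_simps)
    then show ?thesis by blast
  next
    case a: True
    show ?thesis
    proof (cases "b = 0")
      case False
      have "w = sc (y/b) v" using False a e by (simp add: V W sc_def field_simps)
      then show ?thesis by blast
    next
      case True
      then have "c \<noteq> 0" using a v V by auto
      have "w = sc (z/c) v" using \<open>c \<noteq> 0\<close> True a e by (simp add: V W sc_def field_simps)
      then show ?thesis by blast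
    qed
  qed
qed

lemma prop2: "det2 s t = 0 \<Longrightarrow> s \<noteq> (0,0) \<Longrightarrow> \<exists>c. t = sc2 c s"
proof -
  assume d: "det2 s t = 0" and s: "s \<noteq> (0,0)"
  obtain a b where S: "s = (a,b)" by (cases s) auto
  obtain x y where T: "t = (x,y)" by (cases t) auto
  have e: "a*y = b*x" using d by (simp add: S T det2_def)
  show ?thesis
  proof (cases "a = 0")
    case False
    have "t = sc2 (x/a) s" using False e by (simp add: S T sc2_def field_simps)
    then show ?thesis by blast
  next
    case True
    then have "b \<noteq> 0" using s S by auto
    have "t = sc2 (y/b) s" using \<open>b \<noteq> 0\<close> True e by (simp add: S T sc2_def field_simps)
    then show ?thesis by blast
  qed
qed

lemma cross_nz: "v \<noteq> (0,0,0) \<Longrightarrow> w \<noteq> (0,0,0) \<Longrightarrow> pt_of v \<noteq> pt_of w \<Longrightarrow> cross v w \<noteq> (0,0,0)"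
proof
  assume v: "v \<noteq> (0,0,0)" and w: "w \<noteq> (0,0,0)" and ne: "pt_of v \<noteq> pt_of w" and c: "cross v w = (0,0,0)"
  obtain c where "w = sc c v" using prop3[OF c v] by blast
  moreover have "c \<noteq> 0" using w calculation by (auto simp: sc_0_iff)
  ultimately show False using ne pt_of_sc by metis
qed

lemma line_through: "v \<noteq> (0,0,0) \<Longrightarrow> w \<noteq> (0,0,0) \<Longrightarrow> pt_of v \<noteq> pt_of w \<Longrightarrow>
   is_line (proj_line (cross v w)) \<and> pt_of v \<in> proj_line (cross v w) \<and> pt_of w \<in> proj_line (cross v w)"
proof -
  assume a: "v \<noteq> (0,0,0)" "w \<noteq> (0,0,0)" "pt_of v \<noteq> pt_of w"
  have "lin (cross v w) v = 0" "lin (cross v w) w = 0"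
    by (cases v; cases w; simp add: vdefs algebra_simps)+
  then show ?thesis using a cross_nz[of v w] in_line_iff[of v "cross v w"] in_line_iff[of w "cross v w"]
    unfolding is_line_def by blast
qed

section \<open>Quadratic forms\<close>

lemma sc_vadd: "sc c (vadd a b) = vadd (sc c a) (sc c b)"
  by (cases a; cases b) (simp add: vdefs algebra_simps)
lemma sc_0: "sc 0 v = (0,0,0)"
  by (cases v) (simp add: vdefs)
lemma vadd_0: "vadd a (0,0,0) = a"
  by (cases a) (simp add: vdefs)
lemma lin_vadd: "lin (vadd a b) v = lin a v + lin b v"
  by (cases a; cases b; cases v) (simp add: vdefs algebra_simps)

lemma quad_exp3: "quad A B (vadd (sc a P) (vadd (sc b R) (sc c T))) =
   a^2 * quad A B P + b^2 * quad A B R + c^2 * quad A B T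
   + a*b * bl A B P R + a*c * bl A B P T + b*c * bl A B R T"
  by (cases A; cases B; cases P; cases R; cases T) (simp add: vdefs algebra_simps power2_eq_square)

lemma cramer_id: "sc (det3 v w T) x = vadd (sc (det3 x w T) v) (vadd (sc (det3 v x T) w) (sc (det3 v w x) T))"
  by (cases v; cases w; cases T; cases x) (simp add: vdefs algebra_simps)

lemma det3_lin: "det3 v w T = lin (cross v w) T"
  by (cases v; cases w; cases T) (simp add: vdefs algebra_simps)

lemma det3_cyc: "det3 v R T = lin (cross R T) v" "det3 P v T = lin (cross T P) v" "det3 P R v = lin (cross P R) v"
  by (cases v; cases R; cases T; cases P; simp add: vdefs algebra_simps)+

lemma exists_T: "cross v w \<noteq> (0,0,0) \<Longrightarrow> \<exists>T. det3 v w T \<noteq> 0"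
proof -
  assume c: "cross v w \<noteq> (0,0,0)"
  obtain a b d where C: "cross v w = (a,b,d)" by (cases "cross v w") auto
  have "det3 v w (1,0,0) = a" "det3 v w (0,1,0) = b" "det3 v w (0,0,1) = d"
    by (simp_all add: det3_lin C lin_def)
  then show ?thesis using c C by (metis)
qed

lemma span2: "det3 v w T \<noteq> 0 \<Longrightarrow> det3 v w x = 0 \<Longrightarrow> \<exists>a b. x = vadd (sc a v) (sc b w)"
proof -
  assume D: "det3 v w T \<noteq> 0" and x: "det3 v w x = 0"
  have "sc (det3 v w T) x = vadd (sc (det3 x w T) v) (sc (det3 v x T) w)"
    using cramer_id[of v w T x] x by (simp add: sc_0 vadd_0)
  then have "sc (1/det3 v w T) (sc (det3 v w T) x) = vadd (sc (det3 x w T / det3 v w T) v) (sc (det3 v x T / det3 v w T) w)"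
    by (simp add: sc_vadd sc_sc)
  then show ?thesis using D by (auto simp: sc_sc sc_1)
qed

lemma nl_id: "det3 P R v * (det3 v R T * a + det3 P v T * b + det3 P R v * c) =
  lin (cross P R) v * lin (vadd (sc a (cross R T)) (vadd (sc b (cross T P)) (sc c (cross P R)))) v"
  by (cases v; cases R; cases T; cases P) (simp add: vdefs algebra_simps)

lemma no_line_in_conic:
  assumes "quad A B P = 0" "quad A B R = 0" "bl A B P R = 0" "cross P R \<noteq> (0,0,0)"
  shows "\<not> irreducible_qf A B"
proof -
  obtain T where D: "det3 P R T \<noteq> 0" using exists_T assms(4) by blast
  define D where "D = det3 P R T"
  define u where "u = sc (1/D^2) (cross P R)"
  define w where "w = vadd (sc (bl A B P T) (cross R T)) (vadd (sc (bl A B R T) (cross T P)) (sc (quad A B T) (cross P R)))"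
  have "\<forall>v. quad A B v = lin u v * lin w v"
  proof
    fix v
    have e: "sc D v = vadd (sc (det3 v R T) P) (vadd (sc (det3 P v T) R) (sc (det3 P R v) T))"
      unfolding D_def by (rule cramer_id)
    have "D^2 * quad A B v = quad A B (sc D v)" by (simp add: quad_sc)
    also have "\<dots> = det3 P R v * (det3 v R T * bl A B P T + det3 P v T * bl A B R T + det3 P R v * quad A B T)"
      unfolding e quad_exp3 using assms by (simp add: algebra_simps power2_eq_square)
    also have "\<dots> = lin (cross P R) v * lin w v"
      unfolding w_def by (rule nl_id)
    finally have "D^2 * quad A B v = lin (cross P R) v * lin w v" .
    then show "quad A B v = lin u v * lin w v"
      using D unfolding u_def D_def by (simp add: lin_sc1 field_simps)
  qed
  then show ?thesis unfolding irreducible_qf_def by blast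
qed

section \<open>Parametrisation of an irreducible conic\<close>

definition good :: "'k::field vec3 \<Rightarrow> 'k vec3 \<Rightarrow> 'k vec3 \<times> 'k vec3 \<times> 'k vec3 \<Rightarrow> 'k \<Rightarrow> bool" where
  "good A B V k \<longleftrightarrow> detM V \<noteq> 0 \<and> k \<noteq> 0 \<and> (\<forall>w. quad A B (mapM V w) = k * q0 w)"

lemma bl_nz:
  assumes "irreducible_qf A B" "p \<noteq> (0,0,0)" "r \<noteq> (0,0,0)" "quad A B p = 0" "quad A B r = 0" "pt_of p \<noteq> pt_of r"
  shows "bl A B p r \<noteq> 0"
  using no_line_in_conic[of A B p r] cross_nz[of p r] assms by blast

lemma det3_nz:
  assumes irr: "irreducible_qf A B" and nz: "p0 \<noteq> (0,0,0)" "p1 \<noteq> (0,0,0)" "p2 \<noteq> (0,0,0)"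
    and q: "quad A B p0 = 0" "quad A B p1 = 0" "quad A B p2 = 0"
    and d: "pt_of p0 \<noteq> pt_of p1" "pt_of p0 \<noteq> pt_of p2" "pt_of p1 \<noteq> pt_of p2"
  shows "det3 p0 p1 p2 \<noteq> 0"
proof
  assume z: "det3 p0 p1 p2 = 0"
  obtain T where T: "det3 p0 p1 T \<noteq> 0" using exists_T cross_nz[OF nz(1,2) d(1)] by blast
  obtain a b where ab: "p2 = vadd (sc a p0) (sc b p1)" using span2[OF T z] by blast
  have "p2 = vadd (sc a p0) (vadd (sc b p1) (sc 0 T))" using ab by (simp add: sc_0 vadd_0)
  then have "quad A B p2 = a*b * bl A B p0 p1" using q by (simp add: quad_exp3)
  then have "a = 0 \<or> b = 0" using q bl_nz[OF irr nz(1,2) q(1,2) d(1)] by simp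
  then show False
  proof
    assume "a = 0"
    then have "p2 = sc b p1" using ab by (cases p1) (simp add: vdefs)
    moreover then have "b \<noteq> 0" using nz(3) by (auto simp: sc_0_iff)
    ultimately show False using d(3) pt_of_sc by metis
  next
    assume "b = 0"
    then have "p2 = sc a p0" using ab by (cases p0) (simp add: vdefs)
    moreover then have "a \<noteq> 0" using nz(3) by (auto simp: sc_0_iff)
    ultimately show False using d(2) pt_of_sc by metis
  qed
qed

lemma mapM_param_id:
  "mapM (sc l0 p0, vadd p1 (vadd (sc (-l0) p0) (sc (-l2) p2)), sc l2 p2) (x,y,z)
   = vadd (sc ((x-y)*l0) p0) (vadd (sc y p1) (sc ((z-y)*l2) p2))"
  by (cases p0; cases p1; cases p2) (simp add: vdefs algebra_simps)

lemma detM_param_id: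
  "detM (sc l0 p0, vadd p1 (vadd (sc (-l0) p0) (sc (-l2) p2)), sc l2 p2) = l0 * l2 * det3 p0 p1 p2"
  by (cases p0; cases p1; cases p2) (simp add: vdefs algebra_simps)

lemma param_exists:
  assumes irr: "irreducible_qf A B" and nz: "p0 \<noteq> (0,0,0)" "p1 \<noteq> (0,0,0)" "p2 \<noteq> (0,0,0)"
    and q: "quad A B p0 = 0" "quad A B p1 = 0" "quad A B p2 = 0"
    and d: "pt_of p0 \<noteq> pt_of p1" "pt_of p0 \<noteq> pt_of p2" "pt_of p1 \<noteq> pt_of p2"
  shows "\<exists>V k. good A B V k"
proof -
  define b01 where "b01 = bl A B p0 p1"
  define b02 where "b02 = bl A B p0 p2"
  define b12 where "b12 = bl A B p1 p2"
  have nz01: "b01 \<noteq> 0" unfolding b01_def using bl_nz irr nz q d by blast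
  have nz02: "b02 \<noteq> 0" unfolding b02_def using bl_nz irr nz q d by blast
  have nz12: "b12 \<noteq> 0" unfolding b12_def using bl_nz irr nz q d by blast
  define l0 where "l0 = b12 / b02"
  define l2 where "l2 = b01 / b02"
  define V where "V = (sc l0 p0, vadd p1 (vadd (sc (-l0) p0) (sc (-l2) p2)), sc l2 p2)"
  define k where "k = - (b12 * b01 / b02)"
  have "detM V \<noteq> 0" unfolding V_def detM_param_id l0_def l2_def
    using det3_nz[OF irr nz q d] nz01 nz02 nz12 by simp
  moreover have "k \<noteq> 0" unfolding k_def using nz01 nz02 nz12 by simp
  moreover have "\<forall>w. quad A B (mapM V w) = k * q0 w"
  proof
    fix w :: "'a vec3"
    obtain x y z where w: "w = (x,y,z)" by (cases w) auto
    have "quad A B (mapM V w) = (x-y)*l0*y*b01 + (x-y)*l0*((z-y)*l2)*b02 + y*((z-y)*l2)*b12"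
      unfolding V_def w mapM_param_id quad_exp3 using q by (simp add: b01_def b02_def b12_def)
    also have "\<dots> = k * q0 w"
      unfolding k_def l0_def l2_def w q0_def using nz02 by (simp add: field_simps power2_eq_square)
    finally show "quad A B (mapM V w) = k * q0 w" .
  qed
  ultimately show ?thesis unfolding good_def by blast
qed

definition ptp :: "'k::field vec3 \<times> 'k vec3 \<times> 'k vec3 \<Rightarrow> 'k \<times> 'k \<Rightarrow> 'k ppoint" where
  "ptp V t = pt_of (mapM V (phi t))"

lemma q0_zero: "w \<noteq> (0,0,0) \<Longrightarrow> q0 w = 0 \<Longrightarrow> \<exists>t c. t \<noteq> (0,0) \<and> c \<noteq> 0 \<and> w = sc c (phi t)"
proof -
  assume nz: "w \<noteq> (0,0,0)" and q: "q0 w = 0"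
  obtain x y z where w: "w = (x,y,z)" by (cases w) auto
  have e: "y^2 = x*z" using q by (simp add: w q0_def)
  show ?thesis
  proof (cases "x = 0")
    case False
    have "w = sc x (phi (1, y/x))" using False e by (simp add: w vdefs field_simps power2_eq_square)
    then show ?thesis using False by (metis prod.inject zero_neq_one)
  next
    case True
    then have "y = 0" using e by simp
    then have "z \<noteq> 0" using nz True w by simp
    have "w = sc z (phi (0, 1))" using True \<open>y = 0\<close> by (simp add: w vdefs)
    then show ?thesis using \<open>z \<noteq> 0\<close> by (metis prod.inject zero_neq_one)
  qed
qed

lemma ptp_nz: "detM V \<noteq> 0 \<Longrightarrow> t \<noteq> (0,0) \<Longrightarrow> mapM V (phi t) \<noteq> (0,0,0)"
  using mapM_nz phi_nz by blast

lemma ptp_in_conic: "good A B V k \<Longrightarrow> t \<noteq> (0,0) \<Longrightarrow> ptp V t \<in> conic_pts A B"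
proof -
  assume g: "good A B V k" and t: "t \<noteq> (0,0)"
  have "mapM V (phi t) \<noteq> (0,0,0)" using g t ptp_nz unfolding good_def by blast
  moreover have "quad A B (mapM V (phi t)) = 0" using g
    by (cases t) (simp add: good_def q0_def phi_def power2_eq_square)
  ultimately show ?thesis unfolding ptp_def by (simp add: in_conic_iff)
qed

lemma conic_param:
  assumes g: "good A B V k" and P: "P \<in> conic_pts A B"
  shows "\<exists>t. t \<noteq> (0,0) \<and> P = ptp V t"
proof -
  obtain v where v: "v \<noteq> (0,0,0)" "P = pt_of v" "quad A B v = 0" using P by (rule conic_ptsE)
  have d: "detM V \<noteq> 0" and k: "k \<noteq> 0" and qq: "\<And>w. quad A B (mapM V w) = k * q0 w" using g by (auto simp: good_def)
  define w where "w = invM V v"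
  have vw: "v = mapM V w" unfolding w_def using d by (simp add: mapM_inv)
  have "w \<noteq> (0,0,0)" using v(1) vw mapM_0 by metis
  moreover have "q0 w = 0" using qq[of w] v(3) vw k by simp
  ultimately obtain t c where tc: "t \<noteq> (0,0)" "c \<noteq> 0" "w = sc c (phi t)" using q0_zero by blast
  have "v = sc c (mapM V (phi t))" using vw tc by (simp add: mapM_sc)
  then have "P = ptp V t" using v(2) tc(2) pt_of_sc unfolding ptp_def by metis
  then show ?thesis using tc by blast
qed

lemma phi_prop_det: "phi t' = sc c (phi t) \<Longrightarrow> det2 t t' = 0"
proof -
  assume h: "phi t' = sc c (phi t)"
  obtain a b where t: "t = (a,b)" by (cases t) auto
  obtain x y where t': "t' = (x,y)" by (cases t') auto
  have e: "x^2 = c*a^2" "x*y = c*(a*b)" "y^2 = c*b^2" using h by (auto simp: t t' vdefs)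
  have "(a*y - b*x)^2 = a^2*y^2 - 2*(a*b)*(x*y) + b^2*x^2" by (simp add: algebra_simps power2_eq_square)
  also have "\<dots> = 0" unfolding e by (simp add: algebra_simps power2_eq_square)
  finally show ?thesis by (simp add: t t' det2_def)
qed

lemma ptp_eq_iff:
  assumes d: "detM V \<noteq> 0" and t: "t \<noteq> (0,0)" and t': "t' \<noteq> (0,0)"
  shows "ptp V t = ptp V t' \<longleftrightarrow> det2 t t' = 0"
proof
  assume "ptp V t = ptp V t'"
  then obtain c where c: "mapM V (phi t') = sc c (mapM V (phi t))" unfolding ptp_def using pt_of_eq by metis
  then have "mapM V (phi t') = mapM V (sc c (phi t))" by (simp add: mapM_sc)
  then have "phi t' = sc c (phi t)" using mapM_inj[OF d] by blast
  then show "det2 t t' = 0" by (rule phi_prop_det)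
next
  assume "det2 t t' = 0"
  then obtain c where c: "t' = sc2 c t" using prop2 t by blast
  then have "c \<noteq> 0" using t' by (auto simp: sc2_0_iff)
  have "mapM V (phi t') = sc (c^2) (mapM V (phi t))" by (simp add: c phi_sc2 mapM_sc)
  then show "ptp V t = ptp V t'" unfolding ptp_def using pt_of_sc \<open>c \<noteq> 0\<close> by (metis power_not_zero)
qed

lemma point_coords:
  assumes d: "detM V \<noteq> 0" and Q: "Q \<in> proj_points"
  shows "\<exists>w. w \<noteq> (0,0,0) \<and> Q = pt_of (mapM V w)"
proof -
  obtain v where v: "v \<noteq> (0,0,0)" "Q = pt_of v" using Q by (rule proj_pointsE)
  have "v = mapM V (invM V v)" using d by (simp add: mapM_inv)
  moreover then have "invM V v \<noteq> (0,0,0)" using v mapM_0 by metis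
  ultimately show ?thesis using v by metis
qed

section \<open>Five points determine the conic\<close>

lemma roots_bound:
  fixes p :: "'k::field poly"
  assumes "p \<noteq> 0" "X \<subseteq> {x. poly p x = 0}"
  shows "card X \<le> degree p"
proof -
  have "finite {x. poly p x = 0}" using assms(1) poly_roots_finite by blast
  then have "card X \<le> card {x. poly p x = 0}" using assms(2) card_mono by blast
  also have "\<dots> \<le> degree p" using card_poly_roots_bound assms(1) by blast
  finally show ?thesis .
qed

lemma quartic_zero:
  fixes a d m f c :: "'k::field"
  assumes fin: "finite T" and card: "card T \<ge> 5" and nz: "\<forall>t\<in>T. t \<noteq> (0,0)"
    and dist: "\<forall>t\<in>T. \<forall>t'\<in>T. t \<noteq> t' \<longrightarrow> det2 t t' \<noteq> 0"
    and van: "\<forall>t\<in>T. a*(fst t)^4 + d*(fst t)^3*(snd t) + m*(fst t)^2*(snd t)^2 + f*(fst t)*(snd t)^3 + c*(snd t)^4 = 0"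
  shows "a = 0 \<and> d = 0 \<and> m = 0 \<and> f = 0 \<and> c = 0"
proof -
  define p where "p = [:c, f, m, d, a:]"
  define T' where "T' = {t\<in>T. snd t \<noteq> 0}"
  define X where "X = (\<lambda>t. fst t / snd t) ` T'"
  have Tsub: "T' \<subseteq> T" unfolding T'_def by blast
  have inj: "inj_on (\<lambda>t. fst t / snd t) T'"
  proof (rule inj_onI)
    fix t t' assume t: "t \<in> T'" "t' \<in> T'" "fst t / snd t = fst t' / snd t'"
    then have "det2 t t' = 0" unfolding T'_def by (cases t; cases t') (auto simp: det2_def field_simps)
    then show "t = t'" using dist t Tsub by blast
  qed
  have cardX: "card X = card T'" unfolding X_def using inj card_image by blast
  have roots: "X \<subseteq> {x. poly p x = 0}"
  proof
    fix x assume "x \<in> X"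
    then obtain t where t: "t \<in> T'" "x = fst t / snd t" unfolding X_def by blast
    obtain t0 t1 where tt: "t = (t0,t1)" by (cases t) auto
    have t1: "t1 \<noteq> 0" using t tt unfolding T'_def by auto
    have "t \<in> T" using t Tsub by blast
    then have "a*t0^4 + d*t0^3*t1 + m*t0^2*t1^2 + f*t0*t1^3 + c*t1^4 = 0" using van tt by fastforce
    then have "t1^4 * poly p (t0/t1) = 0" unfolding p_def using t1
      by (simp add: field_simps power2_eq_square power3_eq_cube power4_eq_xxxx)
    then show "x \<in> {x. poly p x = 0}" using t tt t1 by simp
  qed
  have atmost1: "card (T - T') \<le> Suc 0"
  proof (rule card_le_Suc0_iff_eq[THEN iffD2])
    show "finite (T - T')" using fin by blast
    show "\<forall>x\<in>T - T'. \<forall>y\<in>T - T'. x = y"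
    proof (intro ballI)
      fix x y assume "x \<in> T - T'" "y \<in> T - T'"
      then have "snd x = 0" "snd y = 0" "x \<in> T" "y \<in> T" unfolding T'_def by auto
      then have "det2 x y = 0" by (cases x; cases y) (simp add: det2_def)
      then show "x = y" using dist \<open>x \<in> T\<close> \<open>y \<in> T\<close> by blast
    qed
  qed
  have cT: "card T = card T' + card (T - T')"
  proof -
    have "T = T' \<union> (T - T')" using Tsub by blast
    moreover have "finite T'" using fin Tsub finite_subset by blast
    ultimately show ?thesis using fin card_Un_disjoint[of T' "T - T'"] by (metis Diff_disjoint finite_Diff)
  qed
  have degp: "degree p \<le> 4" unfolding p_def
    by (rule degree_le) (auto simp: coeff_pCons split: nat.splits)
  have "p = 0"
  proof (cases "T - T' = {}")
    case True
    then have "card (T - T') = 0" by (metis card.empty)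
    then have "card X \<ge> 5" using cT card cardX by linarith
    moreover have "p \<noteq> 0 \<Longrightarrow> card X \<le> degree p" using roots_bound[OF _ roots] by blast
    ultimately show ?thesis using degp by fastforce
  next
    case False
    then obtain t where t: "t \<in> T" "snd t = 0" unfolding T'_def by blast
    then have "fst t \<noteq> 0" using nz by (cases t) auto
    have "a*(fst t)^4 + d*(fst t)^3*(snd t) + m*(fst t)^2*(snd t)^2 + f*(fst t)*(snd t)^3 + c*(snd t)^4 = 0"
      using van t(1) by blast
    then have "a * (fst t)^4 = 0" using t(2) by simp
    then have a0: "a = 0" using \<open>fst t \<noteq> 0\<close> by simp
    have degp3: "degree p \<le> 3" unfolding p_def a0
      by (rule degree_le) (auto simp: coeff_pCons split: nat.splits)
    have "card X \<ge> 4" using cT card cardX atmost1 by simp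
    moreover have "p \<noteq> 0 \<Longrightarrow> card X \<le> degree p" using roots_bound[OF _ roots] by blast
    ultimately show ?thesis using degp3 by fastforce
  qed
  then show ?thesis unfolding p_def by simp
qed

lemma quad_simp: "quad (a,b,c) (d,e,f) (x,y,z) = a*x^2 + b*y^2 + c*z^2 + d*x*y + e*x*z + f*y*z"
  by (simp add: quad_def)

lemma quad_mapM_coef:
  "quad A2 B2 (mapM (V0,V1,V2) w) = quad (quad A2 B2 V0, quad A2 B2 V1, quad A2 B2 V2)
      (bl A2 B2 V0 V1, bl A2 B2 V0 V2, bl A2 B2 V1 V2) w"
proof -
  obtain x y z where w: "w = (x,y,z)" by (cases w) auto
  have "mapM (V0,V1,V2) w = vadd (sc x V0) (vadd (sc y V1) (sc z V2))" by (simp add: w mapM_def)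
  then show ?thesis by (simp only: quad_exp3 w) (simp only: quad_simp, simp add: algebra_simps)
qed

lemma quad_phi_quartic: "quad (a,b,c) (d,e,f) (phi t) =
   a*(fst t)^4 + d*(fst t)^3*(snd t) + (b+e)*(fst t)^2*(snd t)^2 + f*(fst t)*(snd t)^3 + c*(snd t)^4"
  by (cases t) (simp add: quad_def phi_def algebra_simps power2_eq_square power3_eq_cube power4_eq_xxxx)

lemma good_transfer:
  assumes g: "good A B V k" and irr2: "irreducible_qf A2 B2"
    and S1: "S \<subseteq> conic_pts A B" and S2: "S \<subseteq> conic_pts A2 B2" and fin: "finite S" and cS: "card S \<ge> 5"
  shows "\<exists>k2. good A2 B2 V k2"
proof -
  have d: "detM V \<noteq> 0" using g by (simp add: good_def)
  define tp where "tp P = (SOME t. t \<noteq> (0,0) \<and> P = ptp V t)" for P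
  have tp: "tp P \<noteq> (0,0) \<and> P = ptp V (tp P)" if "P \<in> S" for P
  proof -
    have "\<exists>t. t \<noteq> (0,0) \<and> P = ptp V t" using conic_param[OF g] S1 that by blast
    then show ?thesis unfolding tp_def by (rule someI_ex)
  qed
  define T where "T = tp ` S"
  have inj: "inj_on tp S" by (rule inj_onI) (metis tp)
  have cT: "card T = card S" unfolding T_def using inj card_image by blast
  obtain V0 V1 V2 where V: "V = (V0,V1,V2)" by (cases V) auto
  obtain a b c where A': "(quad A2 B2 V0, quad A2 B2 V1, quad A2 B2 V2) = (a,b,c)" by simp
  obtain dd e f where B': "(bl A2 B2 V0 V1, bl A2 B2 V0 V2, bl A2 B2 V1 V2) = (dd,e,f)" by simp
  have qc: "quad A2 B2 (mapM V w) = quad (a,b,c) (dd,e,f) w" for w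
    using quad_mapM_coef[of A2 B2 V0 V1 V2 w] A' B' V by simp
  have "a = 0 \<and> dd = 0 \<and> b + e = 0 \<and> f = 0 \<and> c = 0"
  proof (rule quartic_zero[of T])
    show "finite T" unfolding T_def using fin by blast
    show "card T \<ge> 5" using cT cS by simp
    show "\<forall>t\<in>T. t \<noteq> (0,0)" unfolding T_def using tp by auto
    show "\<forall>t\<in>T. \<forall>t'\<in>T. t \<noteq> t' \<longrightarrow> det2 t t' \<noteq> 0"
      unfolding T_def using tp ptp_eq_iff[OF d] by (metis imageE)
    show "\<forall>t\<in>T. a*(fst t)^4 + dd*(fst t)^3*(snd t) + (b+e)*(fst t)^2*(snd t)^2 + f*(fst t)*(snd t)^3 + c*(snd t)^4 = 0"
    proof
      fix t assume "t \<in> T"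
      then obtain P where P: "P \<in> S" "t = tp P" unfolding T_def by blast
      have "ptp V t \<in> conic_pts A2 B2" using tp P S2 by auto
      then have "quad A2 B2 (mapM V (phi t)) = 0" unfolding ptp_def
        using in_conic_iff ptp_nz[OF d] tp P by blast
      then show "a*(fst t)^4 + dd*(fst t)^3*(snd t) + (b+e)*(fst t)^2*(snd t)^2 + f*(fst t)*(snd t)^3 + c*(snd t)^4 = 0"
        by (simp add: qc quad_phi_quartic)
    qed
  qed
  then have z: "a = 0" "dd = 0" "e = -b" "f = 0" "c = 0" by (auto simp: add_eq_0_iff)
  have qq: "quad A2 B2 (mapM V w) = b * q0 w" for w
    unfolding qc z by (cases w) (simp add: quad_simp q0_def algebra_simps power2_eq_square)
  have "b \<noteq> 0"
  proof
    assume b0: "b = 0"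
    have "\<forall>v. quad A2 B2 v = lin (0,0,0) v * lin (0,0,0) v"
    proof
      fix v
      have "quad A2 B2 v = quad A2 B2 (mapM V (invM V v))" using d by (simp add: mapM_inv)
      then show "quad A2 B2 v = lin (0,0,0) v * lin (0,0,0) v" using qq b0 by (cases v) (simp add: lin_def)
    qed
    then show False using irr2 unfolding irreducible_qf_def by blast
  qed
  then show ?thesis using qq d unfolding good_def by blast
qed

lemma net_props:
  assumes "dual_3net G1 G2 G3 n"
  shows "G1 \<subseteq> proj_points" "finite G1" "card G1 = n"
    "G2 \<subseteq> proj_points" "finite G2" "card G2 = n"
    "G3 \<subseteq> proj_points" "finite G3" "card G3 = n"
    "G1 \<inter> G2 = {}" "G1 \<inter> G3 = {}" "G2 \<inter> G3 = {}"
    "\<And>L. is_line L \<Longrightarrow> L \<inter> G1 \<noteq> {} \<Longrightarrow> L \<inter> G3 \<noteq> {} \<Longrightarrow> L \<inter> G2 \<noteq> {}"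
    "\<And>L. is_line L \<Longrightarrow> L \<inter> G2 \<noteq> {} \<Longrightarrow> L \<inter> G3 \<noteq> {} \<Longrightarrow> L \<inter> G1 \<noteq> {}"
    "\<And>L. is_line L \<Longrightarrow> L \<inter> G1 \<noteq> {} \<Longrightarrow> L \<inter> G3 \<noteq> {} \<Longrightarrow> card (L \<inter> G3) = 1"
    "\<And>L. is_line L \<Longrightarrow> L \<inter> G2 \<noteq> {} \<Longrightarrow> L \<inter> G3 \<noteq> {} \<Longrightarrow> card (L \<inter> G3) = 1"
proof -
  note d = assms[unfolded dual_3net_def Let_def]
  show "G1 \<subseteq> proj_points" "finite G1" "card G1 = n"
    "G2 \<subseteq> proj_points" "finite G2" "card G2 = n"
    "G3 \<subseteq> proj_points" "finite G3" "card G3 = n"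
    "G1 \<inter> G2 = {}" "G1 \<inter> G3 = {}" "G2 \<inter> G3 = {}"
    using d by auto
  have ln: "\<And>L. is_line L \<Longrightarrow> (L \<inter> G1 \<noteq> {} \<and> L \<inter> G3 \<noteq> {}) \<or> (L \<inter> G2 \<noteq> {} \<and> L \<inter> G3 \<noteq> {}) \<Longrightarrow>
     card (L \<inter> G1) = 1 \<and> card (L \<inter> G2) = 1 \<and> card (L \<inter> G3) = 1"
  proof -
    fix L assume L: "is_line L" and h: "(L \<inter> G1 \<noteq> {} \<and> L \<inter> G3 \<noteq> {}) \<or> (L \<inter> G2 \<noteq> {} \<and> L \<inter> G3 \<noteq> {})"
    have "\<forall>L. is_line L \<longrightarrow>
          (\<exists>i\<in>{1::nat,2,3}. \<exists>j\<in>{1::nat,2,3}. i \<noteq> j \<and> L \<inter> (if i = 1 then G1 else if i = 2 then G2 else G3) \<noteq> {}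
               \<and> L \<inter> (if j = 1 then G1 else if j = 2 then G2 else G3) \<noteq> {}) \<longrightarrow>
          (\<forall>k\<in>{1::nat,2,3}. card (L \<inter> (if k = 1 then G1 else if k = 2 then G2 else G3)) = 1)"
      using d by blast
    then have "(\<exists>i\<in>{1::nat,2,3}. \<exists>j\<in>{1::nat,2,3}. i \<noteq> j \<and> L \<inter> (if i = 1 then G1 else if i = 2 then G2 else G3) \<noteq> {}
               \<and> L \<inter> (if j = 1 then G1 else if j = 2 then G2 else G3) \<noteq> {}) \<longrightarrow>
          (\<forall>k\<in>{1::nat,2,3}. card (L \<inter> (if k = 1 then G1 else if k = 2 then G2 else G3)) = 1)"
      using L by blast
    moreover have "\<exists>i\<in>{1::nat,2,3}. \<exists>j\<in>{1::nat,2,3}. i \<noteq> j \<and> L \<inter> (if i = 1 then G1 else if i = 2 then G2 else G3) \<noteq> {}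
               \<and> L \<inter> (if j = 1 then G1 else if j = 2 then G2 else G3) \<noteq> {}"
      using h
    proof (elim disjE)
      assume "L \<inter> G1 \<noteq> {} \<and> L \<inter> G3 \<noteq> {}"
      then show ?thesis by (intro bexI[where x=1] bexI[where x=3]) auto
    next
      assume "L \<inter> G2 \<noteq> {} \<and> L \<inter> G3 \<noteq> {}"
      then show ?thesis by (intro bexI[where x=2] bexI[where x=3]) auto
    qed
    ultimately have "\<forall>k\<in>{1::nat,2,3}. card (L \<inter> (if k = 1 then G1 else if k = 2 then G2 else G3)) = 1"
      by blast
    from this[rule_format, of 1] this[rule_format, of 2] this[rule_format, of 3]
    show "card (L \<inter> G1) = 1 \<and> card (L \<inter> G2) = 1 \<and> card (L \<inter> G3) = 1" by simp
  qed
  show "\<And>L. is_line L \<Longrightarrow> L \<inter> G1 \<noteq> {} \<Longrightarrow> L \<inter> G3 \<noteq> {} \<Longrightarrow> L \<inter> G2 \<noteq> {}"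
    using ln by (metis card.empty zero_neq_one)
  show "\<And>L. is_line L \<Longrightarrow> L \<inter> G2 \<noteq> {} \<Longrightarrow> L \<inter> G3 \<noteq> {} \<Longrightarrow> L \<inter> G1 \<noteq> {}"
    using ln by (metis card.empty zero_neq_one)
  show "\<And>L. is_line L \<Longrightarrow> L \<inter> G1 \<noteq> {} \<Longrightarrow> L \<inter> G3 \<noteq> {} \<Longrightarrow> card (L \<inter> G3) = 1"
    using ln by blast
  show "\<And>L. is_line L \<Longrightarrow> L \<inter> G2 \<noteq> {} \<Longrightarrow> L \<inter> G3 \<noteq> {} \<Longrightarrow> card (L \<inter> G3) = 1"
    using ln by blast
qed



lemma Rm_zero: "Rm w (0,0) = (0,0)"
  by (cases w) (simp add: Rm_def)

lemma lin_chord_sc: "lin (chord t t') (sc c v) = c * lin (chord t t') v"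
  by (rule lin_sc)

lemma key:
  assumes g: "good A B V k"
    and XY: "X \<subseteq> conic_pts A B" "Y \<subseteq> conic_pts A B"
    and disj: "X \<inter> Y = {}" "X \<inter> Z = {}" "Y \<inter> Z = {}"
    and meet: "\<And>L. is_line L \<Longrightarrow> L \<inter> X \<noteq> {} \<Longrightarrow> L \<inter> Z \<noteq> {} \<Longrightarrow> L \<inter> Y \<noteq> {}"
    and t: "t \<noteq> (0,0)" "ptp V t \<in> X" and w: "w \<noteq> (0,0,0)" "pt_of (mapM V w) \<in> Z"
  shows "q0 w \<noteq> 0 \<and> Rm w t \<noteq> (0,0) \<and> ptp V (Rm w t) \<in> Y"
proof -
  have d: "detM V \<noteq> 0" using g by (simp add: good_def)
  define p where "p = mapM V (phi t)"
  define q where "q = mapM V w"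
  have pnz: "p \<noteq> (0,0,0)" unfolding p_def using ptp_nz[OF d t(1)] .
  have qnz: "q \<noteq> (0,0,0)" unfolding q_def using mapM_nz[OF d w(1)] .
  have pX: "pt_of p \<in> X" using t(2) unfolding p_def ptp_def .
  have qZ: "pt_of q \<in> Z" using w(2) unfolding q_def .
  have pq: "pt_of p \<noteq> pt_of q" using pX qZ disj(2) by (metis IntI empty_iff)
  define L where "L = proj_line (cross p q)"
  have L: "is_line L" "pt_of p \<in> L" "pt_of q \<in> L" using line_through[OF pnz qnz pq] unfolding L_def by auto
  have "L \<inter> X \<noteq> {}" "L \<inter> Z \<noteq> {}" using L pX qZ by (metis IntI empty_iff)+
  then have "L \<inter> Y \<noteq> {}" using meet[OF L(1)] by blast
  then obtain P' where P': "P' \<in> L" "P' \<in> Y" by blast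
  obtain t' where t': "t' \<noteq> (0,0)" "P' = ptp V t'" using conic_param[OF g] P' XY by blast
  have "lin (cross p q) (mapM V (phi t')) = 0"
    using P' t' in_line_iff[OF ptp_nz[OF d t'(1)]] unfolding L_def ptp_def by blast
  then have "detM V * det3 (phi t) w (phi t') = 0"
    unfolding lin_cross p_def q_def det_mapM by simp
  then have "det2 t t' * lin (chord t t') w = 0" using d by (simp add: det_phi)
  moreover have "det2 t t' \<noteq> 0"
  proof
    assume "det2 t t' = 0"
    then have "ptp V t = ptp V t'" using ptp_eq_iff[OF d t(1) t'(1)] by blast
    then show False using t(2) P'(2) t'(2) disj(1) by (metis IntI empty_iff)
  qed
  ultimately have ch: "lin (chord t t') w = 0" by simp
  have q0nz: "q0 w \<noteq> 0"
  proof
    assume "q0 w = 0"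
    then obtain \<sigma> c where sc: "\<sigma> \<noteq> (0,0)" "c \<noteq> 0" "w = sc c (phi \<sigma>)" using q0_zero w(1) by blast
    have Q: "pt_of (mapM V w) = ptp V \<sigma>" unfolding ptp_def sc(3) mapM_sc using pt_of_sc sc(2) by blast
    have "c * (det2 \<sigma> t * det2 \<sigma> t') = 0" using ch unfolding sc(3) lin_sc chord_phi .
    then have "det2 \<sigma> t = 0 \<or> det2 \<sigma> t' = 0" using sc(2) by simp
    then show False
    proof
      assume "det2 \<sigma> t = 0"
      then have "ptp V \<sigma> = ptp V t" using ptp_eq_iff[OF d sc(1) t(1)] by blast
      then show False using Q w(2) t(2) disj(2) by (metis IntI empty_iff)
    next
      assume "det2 \<sigma> t' = 0"
      then have "ptp V \<sigma> = ptp V t'" using ptp_eq_iff[OF d sc(1) t'(1)] by blast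
      then show False using Q w(2) P'(2) t'(2) disj(3) by (metis IntI empty_iff)
    qed
  qed
  have Rnz: "Rm w t \<noteq> (0,0)"
  proof
    assume "Rm w t = (0,0)"
    then have "sc2 (q0 w) t = (0,0)" using Rm_Rm[of w t] Rm_zero by metis
    then show False using q0nz t(1) by (simp add: sc2_0_iff)
  qed
  have "det2 (Rm w t) t' = 0" using ch by (simp add: det_Rm)
  then have "ptp V (Rm w t) = ptp V t'" using ptp_eq_iff[OF d Rnz t'(1)] by blast
  then show ?thesis using q0nz Rnz P'(2) t'(2) by simp
qed

lemma factor_line:
  assumes ac: "alg_closed TYPE('k::field)" and u: "u \<noteq> ((0::'k),0,0)"
  shows "\<exists>\<alpha> \<beta>. \<alpha> \<noteq> (0,0) \<and> \<beta> \<noteq> (0,0) \<and> u = chord \<alpha> \<beta>"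
proof -
  obtain a b c where U: "u = (a,b,c)" by (cases u) auto
  show ?thesis
  proof (cases "a = 0")
    case True
    then have "(c, -b) \<noteq> (0,0)" using u U by auto
    moreover have "u = chord (1,0) (c,-b)" using True U by (simp add: chord_def)
    ultimately show ?thesis by (metis prod.inject zero_neq_one)
  next
    case False
    have "degree [:c,b,a:] = 2" using False by simp
    then have "0 < degree [:c,b,a:]" by simp
    then obtain x where x: "poly [:c,b,a:] x = 0" using ac unfolding alg_closed_def by blast
    have "c + (b * x + a * (x * x)) = 0" using x by (simp add: algebra_simps)
    then have "c = - b*x - a*(x*x)" by (simp add: eq_neg_iff_add_eq_0 algebra_simps)
    then have "u = chord (x,1) (-b - x*a, a)" using U by (simp add: chord_def algebra_simps)
    moreover have "(-b - x*a, a) \<noteq> (0,0)" using False by simp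
    ultimately show ?thesis by (metis prod.inject zero_neq_one)
  qed
qed

lemma self_map_eq:
  assumes "finite R" "inj_on f R" "f ` R \<subseteq> R"
  shows "f ` R = R"
  using assms card_image card_subset_eq by (metis finite_imageI)

lemma secant_count:
  fixes R1 R2 K3 :: "'k::field set"
  assumes fin: "finite R1" "finite K3" and cK: "card K3 = card R1"
    and z: "0 \<notin> R1" "0 \<notin> K3"
    and h12: "\<forall>r\<in>R1. \<forall>\<kappa>\<in>K3. \<kappa> / r \<in> R2"
    and h21: "\<forall>r\<in>R2. \<forall>\<kappa>\<in>K3. \<kappa> / r \<in> R1"
    and r0: "r0 \<in> R1"
  shows "\<forall>r\<in>R1. r ^ card R1 = r0 ^ card R1"
proof -
  have "K3 \<noteq> {}" using cK r0 fin by auto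
  then obtain \<kappa>0 where k0: "\<kappa>0 \<in> K3" by blast
  have k0nz: "\<kappa>0 \<noteq> 0" using k0 z by metis
  have unit: "(\<kappa>/\<kappa>0) ^ card R1 = 1" if k: "\<kappa> \<in> K3" for \<kappa>
  proof -
    define zz where "zz = \<kappa>/\<kappa>0"
    have knz: "\<kappa> \<noteq> 0" using k z by metis
    have zz: "zz \<noteq> 0" unfolding zz_def using knz k0nz by simp
    have img: "(\<lambda>r. zz * r) ` R1 \<subseteq> R1"
    proof
      fix y assume "y \<in> (\<lambda>r. zz * r) ` R1"
      then obtain r where r: "r \<in> R1" "y = zz * r" by blast
      have rnz: "r \<noteq> 0" using r z by metis
      have "\<kappa>0 / r \<in> R2" using h12 r k0 by blast
      then have "\<kappa> / (\<kappa>0 / r) \<in> R1" using h21 k by blast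
      moreover have "\<kappa> / (\<kappa>0 / r) = zz * r" unfolding zz_def using rnz k0nz by simp
      ultimately show "y \<in> R1" using r by simp
    qed
    have inj: "inj_on (\<lambda>r. zz * r) R1" using zz by (auto intro: inj_onI)
    have eq: "(\<lambda>r. zz * r) ` R1 = R1" using self_map_eq[OF fin(1) inj img] .
    have "prod (\<lambda>r. r) R1 = prod (\<lambda>r. r) ((\<lambda>r. zz * r) ` R1)" using eq by simp
    also have "\<dots> = prod (\<lambda>r. zz * r) R1" using prod.reindex[OF inj] by simp
    also have "\<dots> = zz ^ card R1 * prod (\<lambda>r. r) R1" by (simp add: prod.distrib)
    finally have "zz ^ card R1 * prod (\<lambda>r. r) R1 = 1 * prod (\<lambda>r. r) R1" by simp
    moreover have "prod (\<lambda>r. r) R1 \<noteq> 0" using fin(1) z by (simp add: prod_zero_iff)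
    ultimately show ?thesis unfolding zz_def by simp
  qed
  have r0nz: "r0 \<noteq> 0" using r0 z by metis
  have img2: "(\<lambda>\<kappa>. (\<kappa>/\<kappa>0) * r0) ` K3 \<subseteq> R1"
  proof
    fix y assume "y \<in> (\<lambda>\<kappa>. (\<kappa>/\<kappa>0) * r0) ` K3"
    then obtain \<kappa> where k: "\<kappa> \<in> K3" "y = (\<kappa>/\<kappa>0) * r0" by blast
    have "\<kappa>0 / r0 \<in> R2" using h12 r0 k0 by blast
    then have "\<kappa> / (\<kappa>0 / r0) \<in> R1" using h21 k by blast
    moreover have "\<kappa> / (\<kappa>0 / r0) = (\<kappa>/\<kappa>0) * r0" using r0nz k0nz by simp
    ultimately show "y \<in> R1" using k by simp
  qed
  have inj2: "inj_on (\<lambda>\<kappa>. (\<kappa>/\<kappa>0) * r0) K3" using r0nz k0nz by (auto intro: inj_onI)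
  have "card ((\<lambda>\<kappa>. (\<kappa>/\<kappa>0) * r0) ` K3) = card R1" using card_image[OF inj2] cK by simp
  then have eq2: "(\<lambda>\<kappa>. (\<kappa>/\<kappa>0) * r0) ` K3 = R1" using card_subset_eq[OF fin(1) img2] by simp
  show ?thesis
  proof
    fix r assume "r \<in> R1"
    then obtain \<kappa> where k: "\<kappa> \<in> K3" "r = (\<kappa>/\<kappa>0) * r0" using eq2 by blast
    have "r ^ card R1 = (\<kappa>/\<kappa>0) ^ card R1 * r0 ^ card R1" unfolding k(2) by (rule power_mult_distrib)
    then show "r ^ card R1 = r0 ^ card R1" using unit[OF k(1)] by simp
  qed
qed

lemma tangent_count:
  fixes R1 R2 E3 :: "'k::field set"
  assumes fin: "finite R1" and cn: "of_nat (card R1) \<noteq> (0::'k)"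
    and h12: "\<forall>r\<in>R1. \<forall>e\<in>E3. e - r \<in> R2"
    and h21: "\<forall>r\<in>R2. \<forall>e\<in>E3. e - r \<in> R1"
    and e: "e0 \<in> E3" "e \<in> E3"
  shows "e = e0"
proof -
  define dd where "dd = e - e0"
  have img: "(\<lambda>r. r + dd) ` R1 \<subseteq> R1"
  proof
    fix y assume "y \<in> (\<lambda>r. r + dd) ` R1"
    then obtain r where r: "r \<in> R1" "y = r + dd" by blast
    have "e0 - r \<in> R2" using h12 r e by blast
    then have "e - (e0 - r) \<in> R1" using h21 e by blast
    moreover have "e - (e0 - r) = y" using r unfolding dd_def by (simp add: algebra_simps)
    ultimately show "y \<in> R1" by simp
  qed
  have inj: "inj_on (\<lambda>r. r + dd) R1" by (auto intro: inj_onI)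
  have eq: "(\<lambda>r. r + dd) ` R1 = R1" using self_map_eq[OF fin inj img] .
  have "sum (\<lambda>r. r) R1 = sum (\<lambda>r. r) ((\<lambda>r. r + dd) ` R1)" using eq by simp
  also have "\<dots> = sum (\<lambda>r. r + dd) R1" using sum.reindex[OF inj] by simp
  also have "\<dots> = sum (\<lambda>r. r) R1 + of_nat (card R1) * dd" by (simp add: sum.distrib)
  finally have "of_nat (card R1) * dd = 0" by simp
  then have "dd = 0" using cn by simp
  then show ?thesis unfolding dd_def by simp
qed

lemma plk1: "det2 t t' * det2 \<alpha> \<beta> = det2 t \<beta> * det2 \<alpha> t' - det2 \<alpha> t * det2 t' \<beta>"
  by (cases t; cases t'; cases \<alpha>; cases \<beta>) (simp add: det2_def algebra_simps)
lemma plk2: "det2 t t' * det2 \<gamma> \<alpha> = det2 t \<gamma> * det2 t' \<alpha> - det2 t \<alpha> * det2 t' \<gamma>"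
  by (cases t; cases t'; cases \<alpha>; cases \<gamma>) (simp add: det2_def algebra_simps)
lemma det_RR: "det2 (Rm w a) (Rm w b) = - q0 w * det2 a b"
  by (cases w; cases a; cases b) (simp add: det2_def Rm_def q0_def algebra_simps power2_eq_square)

lemma S3: "lin (chord \<alpha> \<beta>) w = 0 \<Longrightarrow>
  det2 (Rm w \<beta>) \<beta> * det2 \<alpha> (Rm w s) * det2 \<alpha> s = det2 \<alpha> (Rm w \<alpha>) * det2 (Rm w s) \<beta> * det2 s \<beta>"
proof -
  assume h: "lin (chord \<alpha> \<beta>) w = 0"
  obtain a0 a1 where a: "\<alpha> = (a0,a1)" by (cases \<alpha>) auto
  obtain b0 b1 where b: "\<beta> = (b0,b1)" by (cases \<beta>) auto
  obtain s0 s1 where s: "s = (s0,s1)" by (cases s) auto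
  obtain w1 w2 w3 where w: "w = (w1,w2,w3)" by (cases w) auto
  have e: "a1*b1*w1 - (a0*b1 + a1*b0)*w2 + a0*b0*w3 = 0" using h by (simp add: a b w chord_def lin_def algebra_simps)
  show ?thesis using e unfolding a b s w by (simp add: det2_def Rm_def) algebra
qed

lemma T3: "lin (chord \<alpha> \<alpha>) w = 0 \<Longrightarrow>
  det2 (Rm w \<gamma>) \<alpha> * (det2 (Rm w s) \<gamma> * det2 s \<alpha> + det2 s \<gamma> * det2 (Rm w s) \<alpha>)
   = det2 (Rm w \<gamma>) \<gamma> * det2 (Rm w s) \<alpha> * det2 s \<alpha>"
proof -
  assume h: "lin (chord \<alpha> \<alpha>) w = 0"
  obtain a0 a1 where a: "\<alpha> = (a0,a1)" by (cases \<alpha>) auto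
  obtain b0 b1 where b: "\<gamma> = (b0,b1)" by (cases \<gamma>) auto
  obtain s0 s1 where s: "s = (s0,s1)" by (cases s) auto
  obtain w1 w2 w3 where w: "w = (w1,w2,w3)" by (cases w) auto
  have e: "a1*a1*w1 - (a0*a1 + a1*a0)*w2 + a0*a0*w3 = 0" using h by (simp add: a w chord_def lin_def algebra_simps)
  show ?thesis using e unfolding a b s w by (simp add: det2_def Rm_def) algebra
qed

lemma cramer2_zero: "det2 \<alpha> \<beta> \<noteq> 0 \<Longrightarrow> det2 x \<beta> = 0 \<Longrightarrow> det2 \<alpha> x = 0 \<Longrightarrow> x = (0,0)"
proof -
  assume h: "det2 \<alpha> \<beta> \<noteq> 0" "det2 x \<beta> = 0" "det2 \<alpha> x = 0"
  obtain a0 a1 where a: "\<alpha> = (a0,a1)" by (cases \<alpha>) auto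
  obtain b0 b1 where b: "\<beta> = (b0,b1)" by (cases \<beta>) auto
  obtain x0 x1 where x: "x = (x0,x1)" by (cases x) auto
  have e1: "x0 * b1 = x1 * b0" "a0 * x1 = a1 * x0" using h by (auto simp: a b x det2_def)
  have "(a0*b1 - a1*b0) * x0 = 0" "(a0*b1 - a1*b0) * x1 = 0"
    using e1 by algebra+
  then show ?thesis using h(1) by (simp add: a b x det2_def)
qed

lemma span_alpha: "\<alpha> \<noteq> (0,0) \<Longrightarrow> det2 x \<alpha> = 0 \<Longrightarrow> det2 y \<alpha> = 0 \<Longrightarrow> det2 x y = 0"
proof -
  assume h: "\<alpha> \<noteq> (0,0)" "det2 x \<alpha> = 0" "det2 y \<alpha> = 0"
  obtain c where c: "x = sc2 c \<alpha>" using prop2[OF _ h(1)] h(2) det2_swap by (metis neg_equal_0_iff_equal)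
  obtain c' where c': "y = sc2 c' \<alpha>" using prop2[OF _ h(1)] h(3) det2_swap by (metis neg_equal_0_iff_equal)
  show ?thesis by (simp add: c c' det2_sc2_l det2_sc2_r det2_self)
qed

lemma Rm_nz: "q0 w \<noteq> 0 \<Longrightarrow> s \<noteq> (0,0) \<Longrightarrow> Rm w s \<noteq> (0,0)"
  using Rm_Rm[of w s] Rm_zero[of w] by (metis sc2_0_iff)

lemma Rm_kernel: "Rm x t = (0,0) \<Longrightarrow> t \<noteq> (0,0) \<Longrightarrow> \<exists>e. x = sc e (phi t)"
proof -
  assume h: "Rm x t = (0,0)" "t \<noteq> (0,0)"
  obtain s0 s1 where t: "t = (s0,s1)" by (cases t) auto
  obtain x1 x2 x3 where x: "x = (x1,x2,x3)" by (cases x) auto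
  have e: "x2*s0 = x1*s1" "x3*s0 = x2*s1" using h by (auto simp: t x Rm_def)
  show ?thesis
  proof (cases "s0 = 0")
    case False
    have e3: "x3*(s0*s0) = x1*(s1*s1)" using e by algebra
    have "x = sc (x1/s0^2) (phi t)" using False e(1) e3
      by (simp add: t x sc_def phi_def field_simps power2_eq_square)
    then show ?thesis by blast
  next
    case True
    then have "s1 \<noteq> 0" using h t by auto
    then have "x1 = 0" "x2 = 0" using e True by auto
    have "x = sc (x3/s1^2) (phi t)" using True \<open>s1 \<noteq> 0\<close> \<open>x1 = 0\<close> \<open>x2 = 0\<close>
      by (simp add: t x sc_def phi_def field_simps power2_eq_square)
    then show ?thesis by blast
  qed
qed

lemma Linj:
  assumes "lin u w = 0" "lin u w' = 0" "lin u (phi t) \<noteq> 0" "t \<noteq> (0,0)" "w \<noteq> (0,0,0)"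
    "Rm w' t \<noteq> (0,0)" "det2 (Rm w t) (Rm w' t) = 0"
  shows "\<exists>c. c \<noteq> 0 \<and> w = sc c w'"
proof -
  have "det2 (Rm w' t) (Rm w t) = 0" using assms(7) det2_swap by (metis neg_equal_0_iff_equal)
  then obtain c where c: "Rm w t = sc2 c (Rm w' t)" using prop2 assms(6) by blast
  define x where "x = vadd w (sc (-c) w')"
  have "Rm x t = (0,0)" using c unfolding x_def
    by (cases w; cases w'; cases t) (simp add: Rm_def vadd_def sc_def sc2_def algebra_simps)
  then obtain e where e: "x = sc e (phi t)" using Rm_kernel assms(4) by blast
  have "lin u x = lin u w - c * lin u w'" unfolding x_def
    by (cases u; cases w; cases w') (simp add: lin_def vadd_def sc_def algebra_simps)
  then have "lin u x = 0" using assms(1,2) by simp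
  then have "e = 0" using e assms(3) by (simp add: lin_sc)
  then have "x = (0,0,0)" using e by (simp add: sc_0)
  then have "w = sc c w'" unfolding x_def by (cases w; cases w') (simp add: vadd_def sc_def algebra_simps)
  moreover then have "c \<noteq> 0" using assms(5) by (auto simp: sc_0)
  ultimately show ?thesis by blast
qed

lemma val_card:
  assumes tp: "\<forall>P\<in>G. tp P \<noteq> (0,0) \<and> P = ptp V (tp P)" and d: "detM V \<noteq> 0"
    and inj: "\<forall>P\<in>G. \<forall>P'\<in>G. f (tp P) = f (tp P') \<longrightarrow> det2 (tp P) (tp P') = 0"
  shows "card ((\<lambda>P. f (tp P)) ` G) = card G"
proof -
  have "inj_on (\<lambda>P. f (tp P)) G"
  proof (rule inj_onI)
    fix P P' assume h: "P \<in> G" "P' \<in> G" "f (tp P) = f (tp P')"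
    then have "det2 (tp P) (tp P') = 0" using inj by blast
    then have "ptp V (tp P) = ptp V (tp P')" using ptp_eq_iff[OF d] tp h(1,2) by blast
    then show "P = P'" using tp h(1,2) by metis
  qed
  then show ?thesis by (rule card_image)
qed

lemma val_mem:
  assumes tp: "\<forall>P\<in>G. tp P \<noteq> (0,0) \<and> P = ptp V (tp P)" and d: "detM V \<noteq> 0"
    and scale: "\<forall>c t. c \<noteq> 0 \<longrightarrow> f (sc2 c t) = f t"
    and t: "t \<noteq> (0,0)" "ptp V t \<in> G"
  shows "f t \<in> (\<lambda>P. f (tp P)) ` G"
proof -
  define P where "P = ptp V t"
  have P: "P \<in> G" using t(2) unfolding P_def .
  have "ptp V (tp P) = ptp V t" using tp P unfolding P_def by metis
  then have "det2 (tp P) t = 0" using ptp_eq_iff[OF d] tp P t(1) by blast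
  then obtain c where c: "t = sc2 c (tp P)" using prop2 tp P by blast
  then have "c \<noteq> 0" using t(1) by (auto simp: sc2_0_iff)
  then have "f t = f (tp P)" using scale c by blast
  then show ?thesis using P by blast
qed

lemma net_structure:
  fixes G1 G2 G3 :: "'k::field ppoint set"
  assumes net: "dual_3net G1 G2 G3 n" and n2: "n \<ge> 2" and cn: "of_nat n \<noteq> (0::'k)"
    and ac: "alg_closed TYPE('k)"
    and conic: "G1 \<union> G2 \<subseteq> conic_pts A B" and line: "G3 \<subseteq> proj_line u" and unz: "u \<noteq> (0,0,0)"
    and g: "good A B V k"
  shows "\<exists>\<alpha> \<beta> c. det2 \<alpha> \<beta> \<noteq> 0 \<and> c \<noteq> 0 \<and> trM V u = chord \<alpha> \<beta> \<and>
           (\<forall>t. t \<noteq> (0,0) \<longrightarrow> ptp V t \<in> G1 \<longrightarrow> det2 \<alpha> t ^ n = c * det2 t \<beta> ^ n)"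
proof -
  note np = net_props[OF net]
  have d: "detM V \<noteq> 0" using g by (simp add: good_def)
  have u'nz: "trM V u \<noteq> (0,0,0)" using trM_inj0[OF d] unz by blast
  obtain \<alpha> \<beta> where ab: "\<alpha> \<noteq> (0,0)" "\<beta> \<noteq> (0,0)" "trM V u = chord \<alpha> \<beta>"
    using factor_line[OF ac u'nz] by blast
  have C1: "G1 \<subseteq> conic_pts A B" and C2: "G2 \<subseteq> conic_pts A B" using conic by auto
  have d21: "G2 \<inter> G1 = {}" using np(10) by (metis Int_commute)
  have key12: "\<And>t w. t \<noteq> (0,0) \<Longrightarrow> ptp V t \<in> G1 \<Longrightarrow> w \<noteq> (0,0,0) \<Longrightarrow> pt_of (mapM V w) \<in> G3 \<Longrightarrow>
       q0 w \<noteq> 0 \<and> Rm w t \<noteq> (0,0) \<and> ptp V (Rm w t) \<in> G2"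
    using key[OF g C1 C2 np(10) np(11) np(12) np(13)] by blast
  have key21: "\<And>t w. t \<noteq> (0,0) \<Longrightarrow> ptp V t \<in> G2 \<Longrightarrow> w \<noteq> (0,0,0) \<Longrightarrow> pt_of (mapM V w) \<in> G3 \<Longrightarrow>
       q0 w \<noteq> 0 \<and> Rm w t \<noteq> (0,0) \<and> ptp V (Rm w t) \<in> G1"
    using key[OF g C2 C1 d21 np(12) np(11) np(14)] by blast
  have G3ne: "G3 \<noteq> {}" using np(9) n2 by auto
  have G1ne: "G1 \<noteq> {}" using np(3) n2 by auto
  have L: "is_line (proj_line u)" using unz unfolding is_line_def by blast
  have I3: "proj_line u \<inter> G3 = G3" using line by blast
  have I3ne: "proj_line u \<inter> G3 \<noteq> {}" using I3 G3ne by simp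
  have offline: "P \<notin> proj_line u" if P: "P \<in> G1 \<union> G2" for P
  proof
    assume Pl: "P \<in> proj_line u"
    have "card (proj_line u \<inter> G3) = 1"
    proof (cases "P \<in> G1")
      case True
      then have "proj_line u \<inter> G1 \<noteq> {}" using Pl by blast
      then show ?thesis using np(15)[OF L _ I3ne] by blast
    next
      case False
      then have "proj_line u \<inter> G2 \<noteq> {}" using Pl P by blast
      then show ?thesis using np(16)[OF L _ I3ne] by blast
    qed
    then show False using I3 np(9) n2 by simp
  qed
  have offt: "det2 t \<alpha> * det2 t \<beta> \<noteq> 0" if t: "t \<noteq> (0,0)" "ptp V t \<in> G1 \<union> G2" for t
  proof -
    have "ptp V t \<notin> proj_line u" using offline t(2) .
    then have "lin u (mapM V (phi t)) \<noteq> 0" using in_line_iff[OF ptp_nz[OF d t(1)]] unfolding ptp_def by blast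
    then show "det2 t \<alpha> * det2 t \<beta> \<noteq> 0" by (simp add: lin_mapM ab(3) chord_phi)
  qed
  have wline: "lin (chord \<alpha> \<beta>) w = 0" if w: "w \<noteq> (0,0,0)" "pt_of (mapM V w) \<in> G3" for w
  proof -
    have "pt_of (mapM V w) \<in> proj_line u" using w(2) line by blast
    then have "lin u (mapM V w) = 0" using in_line_iff[OF mapM_nz[OF d w(1)]] by blast
    then show ?thesis by (simp add: lin_mapM ab(3))
  qed
  define tp where "tp P = (SOME t. t \<noteq> (0,0) \<and> P = ptp V t)" for P
  have tp: "tp P \<noteq> (0,0) \<and> P = ptp V (tp P)" if P: "P \<in> G1 \<union> G2" for P
  proof -
    have "\<exists>t. t \<noteq> (0,0) \<and> P = ptp V t" using conic_param[OF g] conic P by blast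
    then show ?thesis unfolding tp_def by (rule someI_ex)
  qed
  have tp1: "\<forall>P\<in>G1. tp P \<noteq> (0,0) \<and> P = ptp V (tp P)" using tp by blast
  have tp2: "\<forall>P\<in>G2. tp P \<noteq> (0,0) \<and> P = ptp V (tp P)" using tp by blast
  define wq where "wq Q = (SOME w. w \<noteq> (0,0,0) \<and> Q = pt_of (mapM V w))" for Q
  have wq: "wq Q \<noteq> (0,0,0) \<and> Q = pt_of (mapM V (wq Q))" if Q: "Q \<in> G3" for Q
  proof -
    have "\<exists>w. w \<noteq> (0,0,0) \<and> Q = pt_of (mapM V w)" using point_coords[OF d] np(7) Q by blast
    then show ?thesis unfolding wq_def by (rule someI_ex)
  qed
  have wq_inj: "Q = Q'" if "Q \<in> G3" "Q' \<in> G3" "wq Q = sc c (wq Q')" "c \<noteq> 0" for Q Q' c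
  proof -
    have "Q = pt_of (mapM V (sc c (wq Q')))" using wq[OF that(1)] that(3) by simp
    also have "\<dots> = pt_of (mapM V (wq Q'))" using pt_of_sc[OF that(4)] by (simp add: mapM_sc)
    also have "\<dots> = Q'" using wq[OF that(2)] by simp
    finally show ?thesis .
  qed
  obtain P0 where P0: "P0 \<in> G1" using G1ne by blast
  define t0 where "t0 = tp P0"
  have t0: "t0 \<noteq> (0,0)" "ptp V t0 \<in> G1" using tp1 P0 unfolding t0_def by auto
  have fin1: "finite G1" and fin2: "finite G2" and fin3: "finite G3" using np(2) np(5) np(8) by auto
  show ?thesis
  proof (cases "det2 \<alpha> \<beta> = 0")
    case False
    note D = False
    define \<rho> where "\<rho> t = det2 \<alpha> t / det2 t \<beta>" for t
    define K where "K w = det2 \<alpha> (Rm w \<alpha>) / det2 (Rm w \<beta>) \<beta>" for w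
    have \<rho>sc: "\<forall>c t. c \<noteq> 0 \<longrightarrow> \<rho> (sc2 c t) = \<rho> t" unfolding \<rho>_def by (simp add: det2_sc2_l det2_sc2_r)
    have Xnz: "det2 t \<beta> \<noteq> 0 \<and> det2 \<alpha> t \<noteq> 0" if "t \<noteq> (0,0)" "ptp V t \<in> G1 \<union> G2" for t
      using offt[OF that] det2_swap[of \<alpha> t] by auto
    have \<rho>inj: "det2 t t' = 0" if "det2 t \<beta> \<noteq> 0" "det2 t' \<beta> \<noteq> 0" "\<rho> t = \<rho> t'" for t t'
    proof -
      have eq: "det2 \<alpha> t * det2 t' \<beta> = det2 \<alpha> t' * det2 t \<beta>" using that unfolding \<rho>_def by (simp add: frac_eq_eq)
      have "det2 t t' * det2 \<alpha> \<beta> = det2 t \<beta> * det2 \<alpha> t' - det2 \<alpha> t * det2 t' \<beta>" by (rule plk1)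
      also have "\<dots> = 0" using eq by (simp add: mult.commute)
      finally have "det2 t t' * det2 \<alpha> \<beta> = 0" .
      then show ?thesis using D by simp
    qed
    have Knz: "det2 \<alpha> (Rm w \<alpha>) \<noteq> 0 \<and> det2 (Rm w \<beta>) \<beta> \<noteq> 0" if w: "lin (chord \<alpha> \<beta>) w = 0" "q0 w \<noteq> 0" for w
    proof
      have "det2 (Rm w \<alpha>) \<beta> = 0" using w(1) by (simp add: det_Rm)
      then show "det2 \<alpha> (Rm w \<alpha>) \<noteq> 0" using cramer2_zero[OF D] Rm_nz[OF w(2) ab(1)] by blast
    next
      have "det2 (Rm w \<beta>) \<alpha> = 0" using w(1) by (simp add: det_Rm chord_sym)
      then have "det2 \<alpha> (Rm w \<beta>) = 0" using det2_swap by (metis neg_equal_0_iff_equal)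
      then show "det2 (Rm w \<beta>) \<beta> \<noteq> 0" using cramer2_zero[OF D] Rm_nz[OF w(2) ab(2)] by blast
    qed
    have rel: "\<rho> (Rm w t) = K w / \<rho> t"
      if t: "t \<noteq> (0,0)" "ptp V t \<in> G1 \<union> G2" "Rm w t \<noteq> (0,0)" "ptp V (Rm w t) \<in> G1 \<union> G2"
        and w: "lin (chord \<alpha> \<beta>) w = 0" "q0 w \<noteq> 0" for t w
    proof -
      have n1: "det2 t \<beta> \<noteq> 0" "det2 \<alpha> t \<noteq> 0" using Xnz[OF t(1,2)] by auto
      have n2: "det2 (Rm w t) \<beta> \<noteq> 0" using Xnz[OF t(3,4)] by auto
      have n3: "det2 \<alpha> (Rm w \<alpha>) \<noteq> 0" "det2 (Rm w \<beta>) \<beta> \<noteq> 0" using Knz[OF w] by auto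
      have e: "det2 (Rm w \<beta>) \<beta> * det2 \<alpha> (Rm w t) * det2 \<alpha> t = det2 \<alpha> (Rm w \<alpha>) * det2 (Rm w t) \<beta> * det2 t \<beta>"
        using S3[OF w(1)] .
      show ?thesis unfolding \<rho>_def K_def using n1 n2 n3 e by (simp add: field_simps)
    qed
    define R1 where "R1 = (\<lambda>P. \<rho> (tp P)) ` G1"
    define R2 where "R2 = (\<lambda>P. \<rho> (tp P)) ` G2"
    define K3 where "K3 = (\<lambda>Q. K (wq Q)) ` G3"
    have cR1: "card R1 = n" unfolding R1_def
    proof (subst val_card[OF tp1 d])
      show "\<forall>P\<in>G1. \<forall>P'\<in>G1. \<rho> (tp P) = \<rho> (tp P') \<longrightarrow> det2 (tp P) (tp P') = 0"
      proof (intro ballI impI)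
        fix P P' assume P: "P \<in> G1" "P' \<in> G1" "\<rho> (tp P) = \<rho> (tp P')"
        have a: "tp P \<noteq> (0,0)" "ptp V (tp P) \<in> G1 \<union> G2" using tp1 P(1) by auto
        have b: "tp P' \<noteq> (0,0)" "ptp V (tp P') \<in> G1 \<union> G2" using tp1 P(2) by auto
        show "det2 (tp P) (tp P') = 0" using \<rho>inj[OF conjunct1[OF Xnz[OF a]] conjunct1[OF Xnz[OF b]] P(3)] .
      qed
      show "card G1 = n" using np(3) .
    qed
    have finR1: "finite R1" unfolding R1_def using fin1 by blast
    have finK3: "finite K3" unfolding K3_def using fin3 by blast
    have mem1: "\<rho> t \<in> R1" if "t \<noteq> (0,0)" "ptp V t \<in> G1" for t
      unfolding R1_def using val_mem[OF tp1 d \<rho>sc that] .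
    have mem2: "\<rho> t \<in> R2" if "t \<noteq> (0,0)" "ptp V t \<in> G2" for t
      unfolding R2_def using val_mem[OF tp2 d \<rho>sc that] .
    have Kinj: "inj_on (\<lambda>Q. K (wq Q)) G3"
    proof (rule inj_onI)
      fix Q Q' assume Q: "Q \<in> G3" "Q' \<in> G3" "K (wq Q) = K (wq Q')"
      define w where "w = wq Q"
      define w' where "w' = wq Q'"
      have w: "w \<noteq> (0,0,0)" "pt_of (mapM V w) \<in> G3" using wq Q(1) unfolding w_def by auto
      have w': "w' \<noteq> (0,0,0)" "pt_of (mapM V w') \<in> G3" using wq Q(2) unfolding w'_def by auto
      have k1: "q0 w \<noteq> 0" "Rm w t0 \<noteq> (0,0)" "ptp V (Rm w t0) \<in> G2" using key12[OF t0 w] by auto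
      have k2: "q0 w' \<noteq> 0" "Rm w' t0 \<noteq> (0,0)" "ptp V (Rm w' t0) \<in> G2" using key12[OF t0 w'] by auto
      have "\<rho> (Rm w t0) = \<rho> (Rm w' t0)"
        using rel[OF t0(1) _ k1(2) _ wline[OF w] k1(1)] rel[OF t0(1) _ k2(2) _ wline[OF w'] k2(1)] Q(3) t0(2) k1(3) k2(3)
        unfolding w_def w'_def by simp
      moreover have "det2 (Rm w t0) \<beta> \<noteq> 0" using Xnz[OF k1(2)] k1(3) by auto
      moreover have "det2 (Rm w' t0) \<beta> \<noteq> 0" using Xnz[OF k2(2)] k2(3) by auto
      ultimately have "det2 (Rm w t0) (Rm w' t0) = 0" using \<rho>inj by blast
      moreover have "lin (chord \<alpha> \<beta>) (phi t0) \<noteq> 0" using offt[OF t0(1)] t0(2) by (simp add: chord_phi)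
      ultimately obtain c where "c \<noteq> 0" "w = sc c w'"
        using Linj[OF wline[OF w] wline[OF w'] _ t0(1) w(1) k2(2)] by blast
      then show "Q = Q'" using wq_inj Q(1,2) unfolding w_def w'_def by blast
    qed
    have cK3: "card K3 = card R1" unfolding K3_def using card_image[OF Kinj] np(9) cR1 by simp
    have z1: "0 \<notin> R1"
    proof
      assume "0 \<in> R1"
      then obtain P where P: "P \<in> G1" "\<rho> (tp P) = 0" unfolding R1_def by auto
      have a: "tp P \<noteq> (0,0)" "ptp V (tp P) \<in> G1 \<union> G2" using tp1 P(1) by auto
      show False using Xnz[OF a] P(2) unfolding \<rho>_def by simp
    qed
    have z3: "0 \<notin> K3"
    proof
      assume "0 \<in> K3"
      then obtain Q where Q: "Q \<in> G3" "K (wq Q) = 0" unfolding K3_def by auto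
      have w: "wq Q \<noteq> (0,0,0)" "pt_of (mapM V (wq Q)) \<in> G3" using wq Q(1) by auto
      have "q0 (wq Q) \<noteq> 0" using key12[OF t0 w] by auto
      then show False using Knz[OF wline[OF w]] Q(2) unfolding K_def by simp
    qed
    have h12: "\<forall>r\<in>R1. \<forall>\<kappa>\<in>K3. \<kappa> / r \<in> R2"
    proof (intro ballI)
      fix r \<kappa> assume r: "r \<in> R1" and k: "\<kappa> \<in> K3"
      obtain P where P: "P \<in> G1" "r = \<rho> (tp P)" using r unfolding R1_def by blast
      obtain Q where Q: "Q \<in> G3" "\<kappa> = K (wq Q)" using k unfolding K3_def by blast
      have t: "tp P \<noteq> (0,0)" "ptp V (tp P) \<in> G1" using tp1 P(1) by auto
      have w: "wq Q \<noteq> (0,0,0)" "pt_of (mapM V (wq Q)) \<in> G3" using wq Q(1) by auto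
      have k1: "q0 (wq Q) \<noteq> 0" "Rm (wq Q) (tp P) \<noteq> (0,0)" "ptp V (Rm (wq Q) (tp P)) \<in> G2" using key12[OF t w] by auto
      have "\<rho> (Rm (wq Q) (tp P)) = K (wq Q) / \<rho> (tp P)"
        using rel[OF t(1) _ k1(2) _ wline[OF w] k1(1)] t(2) k1(3) by simp
      then show "\<kappa> / r \<in> R2" using mem2[OF k1(2,3)] P Q by simp
    qed
    have h21: "\<forall>r\<in>R2. \<forall>\<kappa>\<in>K3. \<kappa> / r \<in> R1"
    proof (intro ballI)
      fix r \<kappa> assume r: "r \<in> R2" and k: "\<kappa> \<in> K3"
      obtain P where P: "P \<in> G2" "r = \<rho> (tp P)" using r unfolding R2_def by blast
      obtain Q where Q: "Q \<in> G3" "\<kappa> = K (wq Q)" using k unfolding K3_def by blast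
      have t: "tp P \<noteq> (0,0)" "ptp V (tp P) \<in> G2" using tp2 P(1) by auto
      have w: "wq Q \<noteq> (0,0,0)" "pt_of (mapM V (wq Q)) \<in> G3" using wq Q(1) by auto
      have k1: "q0 (wq Q) \<noteq> 0" "Rm (wq Q) (tp P) \<noteq> (0,0)" "ptp V (Rm (wq Q) (tp P)) \<in> G1" using key21[OF t w] by auto
      have "\<rho> (Rm (wq Q) (tp P)) = K (wq Q) / \<rho> (tp P)"
        using rel[OF t(1) _ k1(2) _ wline[OF w] k1(1)] t(2) k1(3) by simp
      then show "\<kappa> / r \<in> R1" using mem1[OF k1(2,3)] P Q by simp
    qed
    have r0: "\<rho> t0 \<in> R1" using mem1[OF t0] .
    have pw: "\<forall>r\<in>R1. r ^ card R1 = \<rho> t0 ^ card R1"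
      using secant_count[OF finR1 finK3 cK3 z1 z3 h12 h21 r0] .
    have r0nz: "\<rho> t0 \<noteq> 0" using z1 r0 by metis
    have "det2 \<alpha> t ^ n = \<rho> t0 ^ n * det2 t \<beta> ^ n" if t: "t \<noteq> (0,0)" "ptp V t \<in> G1" for t
    proof -
      have "\<rho> t ^ n = \<rho> t0 ^ n" using pw mem1[OF t] cR1 by metis
      moreover have "det2 \<alpha> t = \<rho> t * det2 t \<beta>" using Xnz[of t] t unfolding \<rho>_def by simp
      ultimately show ?thesis by (simp add: power_mult_distrib)
    qed
    then show ?thesis using D ab(3) r0nz by (intro exI[of _ \<alpha>] exI[of _ \<beta>] exI[of _ "\<rho> t0 ^ n"]) simp
  next
    case True
    note D = True
    obtain e where e: "\<beta> = sc2 e \<alpha>" using prop2[OF D ab(1)] by blast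
    have enz: "e \<noteq> 0" using ab(2) e by (auto simp: sc2_0_iff)
    have chb: "chord \<alpha> \<beta> = sc e (chord \<alpha> \<alpha>)" using chord_sc2[of 1 \<alpha> e \<alpha>] e by (simp add: sc2_1)
    have wline2: "lin (chord \<alpha> \<alpha>) w = 0" if w: "w \<noteq> (0,0,0)" "pt_of (mapM V w) \<in> G3" for w
      using wline[OF w] chb enz by (simp add: lin_sc1)
    have offt2: "det2 t \<alpha> \<noteq> 0" if t: "t \<noteq> (0,0)" "ptp V t \<in> G1 \<union> G2" for t
      using offt[OF t] by simp
    have "det2 \<alpha> (1,0) \<noteq> 0 \<or> det2 \<alpha> (0,1) \<noteq> 0" using ab(1) by (cases \<alpha>) (auto simp: det2_def)
    then obtain \<gamma> where \<gamma>: "det2 \<alpha> \<gamma> \<noteq> 0" by blast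
    have \<gamma>': "det2 \<gamma> \<alpha> \<noteq> 0" using \<gamma> det2_swap by (metis neg_equal_0_iff_equal)
    define \<tau> where "\<tau> t = det2 t \<gamma> / det2 t \<alpha>" for t
    define E where "E w = det2 (Rm w \<gamma>) \<gamma> / det2 (Rm w \<gamma>) \<alpha>" for w
    have \<tau>sc: "\<forall>c t. c \<noteq> 0 \<longrightarrow> \<tau> (sc2 c t) = \<tau> t" unfolding \<tau>_def by (simp add: det2_sc2_l)
    have \<tau>inj: "det2 t t' = 0" if "det2 t \<alpha> \<noteq> 0" "det2 t' \<alpha> \<noteq> 0" "\<tau> t = \<tau> t'" for t t'
    proof -
      have eq: "det2 t \<gamma> * det2 t' \<alpha> = det2 t' \<gamma> * det2 t \<alpha>" using that unfolding \<tau>_def by (simp add: frac_eq_eq)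
      have "det2 t t' * det2 \<gamma> \<alpha> = det2 t \<gamma> * det2 t' \<alpha> - det2 t \<alpha> * det2 t' \<gamma>" by (rule plk2)
      also have "\<dots> = 0" using eq by (simp add: mult.commute)
      finally have "det2 t t' * det2 \<gamma> \<alpha> = 0" .
      then show ?thesis using \<gamma>' by simp
    qed
    have Enz: "det2 (Rm w \<gamma>) \<alpha> \<noteq> 0" if w: "lin (chord \<alpha> \<alpha>) w = 0" "q0 w \<noteq> 0" for w
    proof
      assume z: "det2 (Rm w \<gamma>) \<alpha> = 0"
      have "det2 (Rm w \<alpha>) \<alpha> = 0" using w(1) by (simp add: det_Rm)
      then have "det2 (Rm w \<alpha>) (Rm w \<gamma>) = 0" using span_alpha[OF ab(1) _ z] by blast
      then show False using det_RR[of w \<alpha> \<gamma>] w(2) \<gamma> by simp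
    qed
    have rel: "\<tau> (Rm w t) = E w - \<tau> t"
      if t: "t \<noteq> (0,0)" "ptp V t \<in> G1 \<union> G2" "Rm w t \<noteq> (0,0)" "ptp V (Rm w t) \<in> G1 \<union> G2"
        and w: "lin (chord \<alpha> \<alpha>) w = 0" "q0 w \<noteq> 0" for t w
    proof -
      have n1: "det2 t \<alpha> \<noteq> 0" using offt2[OF t(1,2)] .
      have n2: "det2 (Rm w t) \<alpha> \<noteq> 0" using offt2[OF t(3,4)] .
      have n3: "det2 (Rm w \<gamma>) \<alpha> \<noteq> 0" using Enz[OF w] .
      have e: "det2 (Rm w \<gamma>) \<alpha> * (det2 (Rm w t) \<gamma> * det2 t \<alpha> + det2 t \<gamma> * det2 (Rm w t) \<alpha>)
          = det2 (Rm w \<gamma>) \<gamma> * det2 (Rm w t) \<alpha> * det2 t \<alpha>"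
        using T3[OF w(1)] .
      show ?thesis unfolding \<tau>_def E_def using n1 n2 n3 e by (simp add: field_simps)
    qed
    define R1 where "R1 = (\<lambda>P. \<tau> (tp P)) ` G1"
    define R2 where "R2 = (\<lambda>P. \<tau> (tp P)) ` G2"
    define E3 where "E3 = (\<lambda>Q. E (wq Q)) ` G3"
    have cR1: "card R1 = n" unfolding R1_def
    proof (subst val_card[OF tp1 d])
      show "\<forall>P\<in>G1. \<forall>P'\<in>G1. \<tau> (tp P) = \<tau> (tp P') \<longrightarrow> det2 (tp P) (tp P') = 0"
      proof (intro ballI impI)
        fix P P' assume P: "P \<in> G1" "P' \<in> G1" "\<tau> (tp P) = \<tau> (tp P')"
        have a: "tp P \<noteq> (0,0)" "ptp V (tp P) \<in> G1 \<union> G2" using tp1 P(1) by auto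
        have b: "tp P' \<noteq> (0,0)" "ptp V (tp P') \<in> G1 \<union> G2" using tp1 P(2) by auto
        show "det2 (tp P) (tp P') = 0" using \<tau>inj[OF offt2[OF a] offt2[OF b] P(3)] .
      qed
      show "card G1 = n" using np(3) .
    qed
    have finR1: "finite R1" unfolding R1_def using fin1 by blast
    have mem1: "\<tau> t \<in> R1" if "t \<noteq> (0,0)" "ptp V t \<in> G1" for t
      unfolding R1_def using val_mem[OF tp1 d \<tau>sc that] .
    have mem2: "\<tau> t \<in> R2" if "t \<noteq> (0,0)" "ptp V t \<in> G2" for t
      unfolding R2_def using val_mem[OF tp2 d \<tau>sc that] .
    have Einj: "inj_on (\<lambda>Q. E (wq Q)) G3"
    proof (rule inj_onI)
      fix Q Q' assume Q: "Q \<in> G3" "Q' \<in> G3" "E (wq Q) = E (wq Q')"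
      define w where "w = wq Q"
      define w' where "w' = wq Q'"
      have w: "w \<noteq> (0,0,0)" "pt_of (mapM V w) \<in> G3" using wq Q(1) unfolding w_def by auto
      have w': "w' \<noteq> (0,0,0)" "pt_of (mapM V w') \<in> G3" using wq Q(2) unfolding w'_def by auto
      have k1: "q0 w \<noteq> 0" "Rm w t0 \<noteq> (0,0)" "ptp V (Rm w t0) \<in> G2" using key12[OF t0 w] by auto
      have k2: "q0 w' \<noteq> 0" "Rm w' t0 \<noteq> (0,0)" "ptp V (Rm w' t0) \<in> G2" using key12[OF t0 w'] by auto
      have "\<tau> (Rm w t0) = \<tau> (Rm w' t0)"
        using rel[OF t0(1) _ k1(2) _ wline2[OF w] k1(1)] rel[OF t0(1) _ k2(2) _ wline2[OF w'] k2(1)] Q(3) t0(2) k1(3) k2(3)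
        unfolding w_def w'_def by simp
      moreover have "det2 (Rm w t0) \<alpha> \<noteq> 0" using offt2[OF k1(2)] k1(3) by auto
      moreover have "det2 (Rm w' t0) \<alpha> \<noteq> 0" using offt2[OF k2(2)] k2(3) by auto
      ultimately have "det2 (Rm w t0) (Rm w' t0) = 0" using \<tau>inj by blast
      moreover have "lin (chord \<alpha> \<alpha>) (phi t0) \<noteq> 0" using offt2[OF t0(1)] t0(2) by (simp add: chord_phi)
      ultimately obtain c where "c \<noteq> 0" "w = sc c w'"
        using Linj[OF wline2[OF w] wline2[OF w'] _ t0(1) w(1) k2(2)] by blast
      then show "Q = Q'" using wq_inj Q(1,2) unfolding w_def w'_def by blast
    qed
    have cE3: "card E3 = n" unfolding E3_def using card_image[OF Einj] np(9) by simp
    have h12: "\<forall>r\<in>R1. \<forall>e\<in>E3. e - r \<in> R2"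
    proof (intro ballI)
      fix r \<kappa> assume r: "r \<in> R1" and k: "\<kappa> \<in> E3"
      obtain P where P: "P \<in> G1" "r = \<tau> (tp P)" using r unfolding R1_def by blast
      obtain Q where Q: "Q \<in> G3" "\<kappa> = E (wq Q)" using k unfolding E3_def by blast
      have t: "tp P \<noteq> (0,0)" "ptp V (tp P) \<in> G1" using tp1 P(1) by auto
      have w: "wq Q \<noteq> (0,0,0)" "pt_of (mapM V (wq Q)) \<in> G3" using wq Q(1) by auto
      have k1: "q0 (wq Q) \<noteq> 0" "Rm (wq Q) (tp P) \<noteq> (0,0)" "ptp V (Rm (wq Q) (tp P)) \<in> G2" using key12[OF t w] by auto
      have "\<tau> (Rm (wq Q) (tp P)) = E (wq Q) - \<tau> (tp P)"
        using rel[OF t(1) _ k1(2) _ wline2[OF w] k1(1)] t(2) k1(3) by simp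
      then show "\<kappa> - r \<in> R2" using mem2[OF k1(2,3)] P Q by simp
    qed
    have h21: "\<forall>r\<in>R2. \<forall>e\<in>E3. e - r \<in> R1"
    proof (intro ballI)
      fix r \<kappa> assume r: "r \<in> R2" and k: "\<kappa> \<in> E3"
      obtain P where P: "P \<in> G2" "r = \<tau> (tp P)" using r unfolding R2_def by blast
      obtain Q where Q: "Q \<in> G3" "\<kappa> = E (wq Q)" using k unfolding E3_def by blast
      have t: "tp P \<noteq> (0,0)" "ptp V (tp P) \<in> G2" using tp2 P(1) by auto
      have w: "wq Q \<noteq> (0,0,0)" "pt_of (mapM V (wq Q)) \<in> G3" using wq Q(1) by auto
      have k1: "q0 (wq Q) \<noteq> 0" "Rm (wq Q) (tp P) \<noteq> (0,0)" "ptp V (Rm (wq Q) (tp P)) \<in> G1" using key21[OF t w] by auto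
      have "\<tau> (Rm (wq Q) (tp P)) = E (wq Q) - \<tau> (tp P)"
        using rel[OF t(1) _ k1(2) _ wline2[OF w] k1(1)] t(2) k1(3) by simp
      then show "\<kappa> - r \<in> R1" using mem1[OF k1(2,3)] P Q by simp
    qed
    have cn': "of_nat (card R1) \<noteq> (0::'k)" using cR1 cn by simp
    obtain Q0 where Q0: "Q0 \<in> G3" using G3ne by blast
    define e0 where "e0 = E (wq Q0)"
    have e0: "e0 \<in> E3" unfolding E3_def e0_def using Q0 by blast
    have "E3 \<subseteq> {e0}"
    proof
      fix x assume "x \<in> E3"
      then have "x = e0" by (rule tangent_count[OF finR1 cn' h12 h21 e0])
      then show "x \<in> {e0}" by simp
    qed
    then have "card E3 \<le> card {e0}" by (intro card_mono) auto
    then have "card E3 \<le> 1" by simp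
    then show ?thesis using cE3 n2 by simp
  qed
qed

section \<open>Comparison of the two nets\<close>

lemma alg_case:
  fixes a1 b1 a2 b2 c' :: "'k::field"
  assumes E1: "b1 * a1 ^ (m+1) = c' * b2 * a2 ^ (m+1)" and E2: "b1^2 * a1 ^ m = c' * b2^2 * a2 ^ m"
    and \<Delta>: "a1 * b2 - b1 * a2 \<noteq> 0" and c': "c' \<noteq> 0"
  shows "(a1 = 0 \<and> b2 = 0) \<or> (b1 = 0 \<and> a2 = 0)"
proof (cases "a1 = 0")
  case True
  then have "c' * b2 * a2 ^ (m+1) = 0" using E1 by simp
  then have "b2 = 0 \<or> a2 = 0" using c' by auto
  then show ?thesis using True \<Delta> by auto
next
  case a1: False
  show ?thesis
  proof (cases "b1 = 0")
    case True
    then have "c' * b2 * a2 ^ (m+1) = 0" using E1 by simp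
    then have "b2 = 0 \<or> a2 = 0" using c' by auto
    then show ?thesis using True \<Delta> by auto
  next
    case b1: False
    have l: "b1 * a1 ^ (m+1) \<noteq> 0" using a1 b1 by simp
    have "b1^2 * a1 ^ m * (a1 * a2) = c' * b2^2 * a2 ^ m * (a1 * a2)" using E2 by simp
    also have "\<dots> = (c' * b2 * a2 ^ (m+1)) * (b2 * a1)" by (simp add: algebra_simps power2_eq_square)
    also have "\<dots> = (b1 * a1 ^ (m+1)) * (b2 * a1)" using E1 by simp
    finally have "(b1 * a1 ^ (m+1)) * (b1 * a2 - b2 * a1) = 0" by (simp add: algebra_simps power2_eq_square)
    then have "b1 * a2 - b2 * a1 = 0" using l by simp
    then show ?thesis using \<Delta> by (simp add: algebra_simps)
  qed
qed

lemma cr2a: "det2 \<alpha>' t * det2 \<alpha> \<beta> = det2 t \<beta> * det2 \<alpha>' \<alpha> + det2 \<alpha> t * det2 \<alpha>' \<beta>"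
  by (cases t; cases \<alpha>; cases \<beta>; cases \<alpha>') (simp add: det2_def algebra_simps)
lemma cr2b: "det2 t \<beta>' * det2 \<alpha> \<beta> = det2 t \<beta> * det2 \<alpha> \<beta>' + det2 \<alpha> t * det2 \<beta> \<beta>'"
  by (cases t; cases \<alpha>; cases \<beta>; cases \<beta>') (simp add: det2_def algebra_simps)
lemma plk3: "det2 \<alpha>' \<alpha> * det2 \<beta> \<beta>' - det2 \<alpha>' \<beta> * det2 \<alpha> \<beta>' = - (det2 \<alpha> \<beta> * det2 \<alpha>' \<beta>')"
  by (cases \<alpha>; cases \<beta>; cases \<alpha>'; cases \<beta>') (simp add: det2_def algebra_simps)

lemma compare:
  fixes S :: "('k::field \<times> 'k) set"
  assumes fin: "finite S" and cS: "card S = n" and n3: "n \<ge> 3"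
    and cn: "of_nat n \<noteq> (0::'k)" and c2: "of_nat (n choose 2) \<noteq> (0::'k)"
    and nz: "\<forall>t\<in>S. t \<noteq> (0,0)" and dist: "\<forall>t\<in>S. \<forall>t'\<in>S. t \<noteq> t' \<longrightarrow> det2 t t' \<noteq> 0"
    and D: "det2 \<alpha> \<beta> \<noteq> 0" and c: "c \<noteq> 0" and h: "\<forall>t\<in>S. det2 \<alpha> t ^ n = c * det2 t \<beta> ^ n"
    and D': "det2 \<alpha>' \<beta>' \<noteq> 0" and c': "c' \<noteq> 0" and h': "\<forall>t\<in>S. det2 \<alpha>' t ^ n = c' * det2 t \<beta>' ^ n"
  shows "(det2 \<alpha> \<alpha>' = 0 \<and> det2 \<beta> \<beta>' = 0) \<or> (det2 \<alpha> \<beta>' = 0 \<and> det2 \<beta> \<alpha>' = 0)"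
proof -
  have Xnz: "det2 t \<beta> \<noteq> 0" if t: "t \<in> S" for t
  proof
    assume z: "det2 t \<beta> = 0"
    then have "det2 \<alpha> t ^ n = 0" using h t n3 by simp
    then have "det2 \<alpha> t = 0" by simp
    then have "t = (0,0)" using cramer2_zero[OF D z] by blast
    then show False using nz t by blast
  qed
  define \<rho> where "\<rho> t = det2 \<alpha> t / det2 t \<beta>" for t
  define X where "X = \<rho> ` S"
  have inj: "inj_on \<rho> S"
  proof (rule inj_onI)
    fix t t' assume tt: "t \<in> S" "t' \<in> S" "\<rho> t = \<rho> t'"
    have eq: "det2 \<alpha> t * det2 t' \<beta> = det2 \<alpha> t' * det2 t \<beta>"
      using tt Xnz unfolding \<rho>_def by (simp add: frac_eq_eq)
    have "det2 t t' * det2 \<alpha> \<beta> = det2 t \<beta> * det2 \<alpha> t' - det2 \<alpha> t * det2 t' \<beta>" by (rule plk1)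
    also have "\<dots> = 0" using eq by (simp add: mult.commute)
    finally show "t = t'" using D dist tt by auto
  qed
  have cX: "card X = n" unfolding X_def using card_image[OF inj] cS by simp
  define a1 where "a1 = det2 \<alpha>' \<alpha>"
  define b1 where "b1 = det2 \<alpha>' \<beta>"
  define a2 where "a2 = det2 \<alpha> \<beta>'"
  define b2 where "b2 = det2 \<beta> \<beta>'"
  define g where "g = [:a1, b1:] ^ n - smult c' ([:a2, b2:] ^ n)"
  define f where "f = monom 1 n - [:c:]"
  have roots: "poly g x = 0 \<and> poly f x = 0" if x: "x \<in> X" for x
  proof -
    obtain t where t: "t \<in> S" "x = \<rho> t" using x unfolding X_def by blast
    have Xt: "det2 t \<beta> \<noteq> 0" using Xnz t(1) .
    have xt: "det2 \<alpha> t = x * det2 t \<beta>" using Xt t(2) unfolding \<rho>_def by simp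
    have "det2 \<alpha> t ^ n = c * det2 t \<beta> ^ n" using h t(1) by blast
    then have "(x * det2 t \<beta>) ^ n = c * det2 t \<beta> ^ n" by (simp only: xt)
    then have "x ^ n * det2 t \<beta> ^ n = c * det2 t \<beta> ^ n" by (simp add: power_mult_distrib)
    then have f0: "x ^ n = c" using Xt by simp
    have e1: "det2 \<alpha>' t * det2 \<alpha> \<beta> = det2 t \<beta> * (a1 + b1 * x)"
      unfolding cr2a[of \<alpha>' t \<alpha> \<beta>] a1_def b1_def xt by (simp add: algebra_simps)
    have e2: "det2 t \<beta>' * det2 \<alpha> \<beta> = det2 t \<beta> * (a2 + b2 * x)"
      unfolding cr2b[of t \<beta>' \<alpha> \<beta>] a2_def b2_def xt by (simp add: algebra_simps)
    have "(det2 \<alpha>' t * det2 \<alpha> \<beta>) ^ n = c' * (det2 t \<beta>' * det2 \<alpha> \<beta>) ^ n"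
      using h' t(1) by (simp add: power_mult_distrib)
    then have "(det2 t \<beta> * (a1 + b1 * x)) ^ n = c' * (det2 t \<beta> * (a2 + b2 * x)) ^ n"
      by (simp only: e1 e2)
    then have "det2 t \<beta> ^ n * (a1 + b1 * x) ^ n = det2 t \<beta> ^ n * (c' * (a2 + b2 * x) ^ n)"
      by (simp only: power_mult_distrib mult.left_commute)
    then have "(a1 + b1 * x) ^ n = c' * (a2 + b2 * x) ^ n" using Xt by simp
    then show ?thesis unfolding g_def f_def using f0 by (simp add: poly_monom algebra_simps)
  qed
  define hp where "hp = g - smult (coeff g n) f"
  have dl: "degree ([:a, b:] ^ n) \<le> n" for a b :: 'k
  proof -
    have "degree ([:a, b:] ^ n) \<le> degree [:a, b:] * n" by (rule degree_power_le)
    also have "\<dots> \<le> 1 * n" by (intro mult_right_mono) auto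
    finally show ?thesis by simp
  qed
  have degg: "degree g \<le> n" unfolding g_def
  proof (rule degree_diff_le)
    show "degree ([:a1, b1:] ^ n) \<le> n" by (rule dl)
    show "degree (smult c' ([:a2, b2:] ^ n)) \<le> n" using dl[of a2 b2] degree_smult_le order_trans by blast
  qed
  have degf: "degree f \<le> n" unfolding f_def
    by (rule degree_diff_le) (auto simp: degree_monom_le)
  have deghp: "degree hp \<le> n" unfolding hp_def using degg degf
    by (meson degree_diff_le degree_smult_le order_trans)
  have cfn: "coeff f n = 1" unfolding f_def using n3 by (simp add: coeff_monom coeff_pCons split: nat.splits)
  have chn: "coeff hp n = 0" unfolding hp_def using cfn by simp
  have "hp = 0"
  proof (rule ccontr)
    assume hz: "hp \<noteq> 0"
    have "degree hp \<noteq> n" using chn hz by (metis leading_coeff_0_iff)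
    then have "degree hp < n" using deghp by simp
    moreover have "card X \<le> degree hp"
    proof (rule roots_bound[OF hz])
      show "X \<subseteq> {x. poly hp x = 0}" using roots unfolding hp_def by auto
    qed
    ultimately show False using cX by simp
  qed
  have cg: "coeff g k = 0" if k: "0 < k" "k < n" for k
  proof -
    have "coeff f k = 0" unfolding f_def using k by (simp add: coeff_monom coeff_pCons split: nat.splits)
    moreover have "coeff hp k = coeff g k - coeff g n * coeff f k" unfolding hp_def by simp
    ultimately show ?thesis using \<open>hp = 0\<close> by simp
  qed
  have coefg: "coeff g k = of_nat (n choose k) * (b1 ^ k * a1 ^ (n - k) - c' * (b2 ^ k * a2 ^ (n - k)))" if "k \<le> n" for k
    unfolding g_def using that by (simp add: coeff_linear_poly_power algebra_simps)
  define m where "m = n - 2"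
  have m: "n = m + 2" using n3 unfolding m_def by simp
  have E1: "b1 * a1 ^ (m+1) = c' * b2 * a2 ^ (m+1)"
  proof -
    have "of_nat n * (b1 ^ 1 * a1 ^ (n - 1) - c' * (b2 ^ 1 * a2 ^ (n - 1))) = 0"
      using cg[of 1] coefg[of 1] n3 by simp
    then have z: "b1 ^ 1 * a1 ^ (n - 1) - c' * (b2 ^ 1 * a2 ^ (n - 1)) = 0" using cn by simp
    have "n - 1 = m + 1" using m by simp
    then show ?thesis using z by simp
  qed
  have E2: "b1^2 * a1 ^ m = c' * b2^2 * a2 ^ m"
  proof -
    have "of_nat (n choose 2) * (b1 ^ 2 * a1 ^ (n - 2) - c' * (b2 ^ 2 * a2 ^ (n - 2))) = 0"
      using cg[of 2] coefg[of 2] n3 by simp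
    then have z: "b1 ^ 2 * a1 ^ (n - 2) - c' * (b2 ^ 2 * a2 ^ (n - 2)) = 0" using c2 by simp
    have "n - 2 = m" using m by simp
    then show ?thesis using z by simp
  qed
  have \<Delta>: "a1 * b2 - b1 * a2 \<noteq> 0" unfolding a1_def b1_def a2_def b2_def plk3[of \<alpha>' \<alpha> \<beta> \<beta>'] using D D' by simp
  have "(a1 = 0 \<and> b2 = 0) \<or> (b1 = 0 \<and> a2 = 0)" using alg_case[OF E1 E2 \<Delta> c'] .
  moreover have "det2 \<alpha> \<alpha>' = - a1" "det2 \<beta> \<alpha>' = - b1" unfolding a1_def b1_def
    by (rule det2_swap)+
  ultimately show ?thesis unfolding a2_def b2_def by auto
qed

lemma char_nz:
  assumes "CHAR('k::field) = 0 \<or> CHAR('k) \<ge> 5" "CHAR('k) > 0 \<longrightarrow> n < CHAR('k)" "0 < m" "m \<le> n"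
  shows "of_nat m \<noteq> (0::'k)"
proof
  assume "of_nat m = (0::'k)"
  then have dv: "CHAR('k) dvd m" by (simp add: of_nat_eq_0_iff_char_dvd)
  show False
  proof (cases "CHAR('k) = 0")
    case True
    then show False using dv assms(3) by simp
  next
    case False
    then have "CHAR('k) \<le> m" using dv assms(3) by (simp add: dvd_imp_le)
    then show False using assms(2,4) False by simp
  qed
qed

lemma two_choose: "2 * (n choose 2) = n * (n - 1)"
  by (metis Suc_1 binomial_absorption choose_one)

lemma vdiff_zero: "vadd a (sc (-1) b) = (0,0,0) \<Longrightarrow> a = b"
  by (cases a; cases b) (simp add: vadd_def sc_def)

lemma proj_line_sc: "c \<noteq> 0 \<Longrightarrow> proj_line (sc c u) = proj_line u"
  unfolding proj_line_def by (simp add: lin_sc1)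

lemma three_points:
  assumes "finite G" "card G \<ge> 3"
  obtains P0 P1 P2 where "P0 \<in> G" "P1 \<in> G" "P2 \<in> G" "P0 \<noteq> P1" "P0 \<noteq> P2" "P1 \<noteq> P2"
proof -
  have "G \<noteq> {}" using assms card_gt_0_iff[of G] by simp
  then obtain P0 where P0: "P0 \<in> G" by blast
  have c1: "card (G - {P0}) \<ge> 2" using assms P0 by simp
  then have "G - {P0} \<noteq> {}" using card_gt_0_iff[of "G - {P0}"] by simp
  then obtain P1 where P1: "P1 \<in> G - {P0}" by blast
  have "card (G - {P0} - {P1}) \<ge> 1" using assms P0 P1 c1 by simp
  then have "G - {P0} - {P1} \<noteq> {}" using card_gt_0_iff[of "G - {P0} - {P1}"] by simp
  then obtain P2 where P2: "P2 \<in> G - {P0} - {P1}" by blast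
  show ?thesis using that P0 P1 P2 by blast
qed

theorem proposition4p12:
  fixes G1 G2 G3 D1 D2 D3 C E l s :: "'k::field ppoint set" and n :: nat
  assumes "alg_closed TYPE('k)"
    and "CHAR('k) = 0 \<or> CHAR('k) \<ge> 5"
    and "CHAR('k) > 0 \<longrightarrow> n < CHAR('k)"
    and "conic_line_type G1 G2 G3 n C l"
    and "conic_line_type D1 D2 D3 n E s"
    and "n \<ge> 5"
    and "G1 = D1"
  shows "l = s"
proof -
  note ac = assms(1)
  have n5: "n \<ge> 5" using assms(6) .
  have net1: "dual_3net G1 G2 G3 n" and irrC: "is_irred_conic C" and sub1: "G1 \<union> G2 \<subseteq> C"
    and ll: "is_line l" and G3l: "G3 \<subseteq> l"
    using assms(4) unfolding conic_line_type_def by auto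
  have net2: "dual_3net D1 D2 D3 n" and irrE: "is_irred_conic E" and sub2: "D1 \<union> D2 \<subseteq> E"
    and sl: "is_line s" and D3s: "D3 \<subseteq> s"
    using assms(5) unfolding conic_line_type_def by auto
  obtain A B where AB: "irreducible_qf A B" "C = conic_pts A B" using irrC unfolding is_irred_conic_def by blast
  obtain A2 B2 where AB2: "irreducible_qf A2 B2" "E = conic_pts A2 B2" using irrE unfolding is_irred_conic_def by blast
  obtain u where u: "u \<noteq> (0,0,0)" "l = proj_line u" using ll unfolding is_line_def by blast
  obtain u2 where u2: "u2 \<noteq> (0,0,0)" "s = proj_line u2" using sl unfolding is_line_def by blast
  note np = net_props[OF net1]
  have cn: "of_nat n \<noteq> (0::'k)" using char_nz[OF assms(2,3), of n] n5 by simp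
  have cn1: "of_nat (n - 1) \<noteq> (0::'k)" using char_nz[OF assms(2,3), of "n - 1"] n5 by simp
  have c2: "of_nat (n choose 2) \<noteq> (0::'k)"
  proof
    assume "of_nat (n choose 2) = (0::'k)"
    then have "of_nat (2 * (n choose 2)) = (0::'k)" by simp
    then have "of_nat n * of_nat (n - 1) = (0::'k)" unfolding two_choose by simp
    then show False using cn cn1 by simp
  qed
  have "card G1 \<ge> 3" using np(3) n5 by simp
  then obtain P0 P1 P2 where P: "P0 \<in> G1" "P1 \<in> G1" "P2 \<in> G1" "P0 \<noteq> P1" "P0 \<noteq> P2" "P1 \<noteq> P2"
    using three_points[OF np(2)] by blast
  have G1C: "G1 \<subseteq> conic_pts A B" using sub1 AB(2) by blast
  obtain p0 where p0: "p0 \<noteq> (0,0,0)" "P0 = pt_of p0" "quad A B p0 = 0" using G1C P(1) by (blast elim: conic_ptsE)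
  obtain p1 where p1: "p1 \<noteq> (0,0,0)" "P1 = pt_of p1" "quad A B p1 = 0" using G1C P(2) by (blast elim: conic_ptsE)
  obtain p2 where p2: "p2 \<noteq> (0,0,0)" "P2 = pt_of p2" "quad A B p2 = 0" using G1C P(3) by (blast elim: conic_ptsE)
  obtain V k where g: "good A B V k"
    using param_exists[OF AB(1) p0(1) p1(1) p2(1) p0(3) p1(3) p2(3)] P(4-6) p0(2) p1(2) p2(2) by blast
  have d: "detM V \<noteq> 0" using g by (simp add: good_def)
  have G1E: "G1 \<subseteq> conic_pts A2 B2" using sub2 AB2(2) assms(7) by blast
  obtain k2 where g2: "good A2 B2 V k2" using good_transfer[OF g AB2(1) G1C G1E np(2)] np(3) n5 by auto
  obtain \<alpha> \<beta> c where S1: "det2 \<alpha> \<beta> \<noteq> 0" "c \<noteq> 0" "trM V u = chord \<alpha> \<beta>"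
      "\<forall>t. t \<noteq> (0,0) \<longrightarrow> ptp V t \<in> G1 \<longrightarrow> det2 \<alpha> t ^ n = c * det2 t \<beta> ^ n"
    using net_structure[OF net1 _ cn ac _ _ u(1) g] n5 sub1 AB(2) G3l u(2) by auto
  obtain \<alpha>' \<beta>' c' where S2: "det2 \<alpha>' \<beta>' \<noteq> 0" "c' \<noteq> 0" "trM V u2 = chord \<alpha>' \<beta>'"
      "\<forall>t. t \<noteq> (0,0) \<longrightarrow> ptp V t \<in> D1 \<longrightarrow> det2 \<alpha>' t ^ n = c' * det2 t \<beta>' ^ n"
    using net_structure[OF net2 _ cn ac _ _ u2(1) g2] n5 sub2 AB2(2) D3s u2(2) by auto
  define tp where "tp P = (SOME t. t \<noteq> (0,0) \<and> P = ptp V t)" for P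
  have tp: "tp P \<noteq> (0,0) \<and> P = ptp V (tp P)" if "P \<in> G1" for P
  proof -
    have "\<exists>t. t \<noteq> (0,0) \<and> P = ptp V t" using conic_param[OF g] G1C that by blast
    then show ?thesis unfolding tp_def by (rule someI_ex)
  qed
  define S where "S = tp ` G1"
  have injtp: "inj_on tp G1" by (rule inj_onI) (metis tp)
  have cS: "card S = n" unfolding S_def using card_image[OF injtp] np(3) by simp
  have finS: "finite S" unfolding S_def using np(2) by blast
  have nzS: "\<forall>t\<in>S. t \<noteq> (0,0)" unfolding S_def using tp by auto
  have distS: "\<forall>t\<in>S. \<forall>t'\<in>S. t \<noteq> t' \<longrightarrow> det2 t t' \<noteq> 0"
  proof (intro ballI impI)
    fix t t' assume tt: "t \<in> S" "t' \<in> S" "t \<noteq> t'"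
    obtain P where P: "P \<in> G1" "t = tp P" using tt(1) unfolding S_def by blast
    obtain P' where P': "P' \<in> G1" "t' = tp P'" using tt(2) unfolding S_def by blast
    have "P \<noteq> P'" using tt(3) P P' by blast
    then have "ptp V t \<noteq> ptp V t'" using tp P P' by metis
    then show "det2 t t' \<noteq> 0" using ptp_eq_iff[OF d] nzS tt(1,2) by blast
  qed
  have inG1: "ptp V t \<in> G1" if "t \<in> S" for t
    using that tp unfolding S_def by auto
  have h: "\<forall>t\<in>S. det2 \<alpha> t ^ n = c * det2 t \<beta> ^ n" using S1(4) nzS inG1 by blast
  have h': "\<forall>t\<in>S. det2 \<alpha>' t ^ n = c' * det2 t \<beta>' ^ n" using S2(4) nzS inG1 assms(7) by blast
  have cmp: "(det2 \<alpha> \<alpha>' = 0 \<and> det2 \<beta> \<beta>' = 0) \<or> (det2 \<alpha> \<beta>' = 0 \<and> det2 \<beta> \<alpha>' = 0)"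
    using compare[OF finS cS _ cn c2 nzS distS S1(1) S1(2) h S2(1) S2(2) h'] n5 by simp
  have nz0: "\<alpha> \<noteq> (0,0)" "\<beta> \<noteq> (0,0)" "\<alpha>' \<noteq> (0,0)" "\<beta>' \<noteq> (0,0)"
    using S1(1) S2(1) by (auto simp: det2_def)
  have "\<exists>lam. lam \<noteq> 0 \<and> chord \<alpha>' \<beta>' = sc lam (chord \<alpha> \<beta>)"
    using cmp
  proof
    assume a: "det2 \<alpha> \<alpha>' = 0 \<and> det2 \<beta> \<beta>' = 0"
    obtain x where x: "\<alpha>' = sc2 x \<alpha>" using prop2 a nz0(1) by blast
    obtain y where y: "\<beta>' = sc2 y \<beta>" using prop2 a nz0(2) by blast
    have "x \<noteq> 0" "y \<noteq> 0" using x y nz0(3,4) by (auto simp: sc2_0_iff)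
    then show ?thesis using chord_sc2[of x \<alpha> y \<beta>] x y by (intro exI[of _ "x*y"]) simp
  next
    assume a: "det2 \<alpha> \<beta>' = 0 \<and> det2 \<beta> \<alpha>' = 0"
    obtain x where x: "\<alpha>' = sc2 x \<beta>" using prop2 a nz0(2) by blast
    obtain y where y: "\<beta>' = sc2 y \<alpha>" using prop2 a nz0(1) by blast
    have "x \<noteq> 0" "y \<noteq> 0" using x y nz0(3,4) by (auto simp: sc2_0_iff)
    then show ?thesis using chord_sc2[of x \<beta> y \<alpha>] x y chord_sym[of \<beta> \<alpha>] by (intro exI[of _ "x*y"]) simp
  qed
  then obtain lam where lam: "lam \<noteq> 0" "chord \<alpha>' \<beta>' = sc lam (chord \<alpha> \<beta>)" by blast
  have "trM V (vadd u2 (sc (-1) (sc lam u))) = vadd (trM V u2) (sc (-1) (trM V (sc lam u)))"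
    by (rule trM_diff)
  also have "\<dots> = vadd (sc lam (trM V u)) (sc (-1) (sc lam (trM V u)))"
    by (simp only: trM_sc S2(3) lam(2) S1(3))
  also have "\<dots> = (0,0,0)" by (cases "sc lam (trM V u)") (simp add: vadd_def sc_def)
  finally have "u2 = sc lam u" using trM_inj0[OF d] vdiff_zero by blast
  then have "s = l" using u u2 proj_line_sc[OF lam(1)] by simp
  then show ?thesis by simp
qed

end
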